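(* Let $(R,\mathfrak{m},k)$ be a commutative Noetherian local ring and let $(\mathbf{F},\partial)$ be a minimal Tate resolution of $k$ over $R$. Then the linear part $\operatorname{lin}^R(\mathbf{F})$ has a structure of (graded commutative) DG algebra over $R^{\mathsf g}$ induced by that of $\mathbf{F}$: for $x\in\mathfrak{m}^iF_n$ and $y\in\mathfrak{m}^jF_m$ with classes $x^*\in\mathfrak{m}^iF_n/\mathfrak{m}^{i+1}F_n$ and $y^*\in\mathfrak{m}^jF_m/\mathfrak{m}^{j+1}F_m$, the product $x^*y^*$ is the class of $xy$ in $\mathfrak{m}^{i+j}F_{n+m}/\mathfrak{m}^{i+j+1}F_{n+m}$.
   Context: A (graded commutative) DG algebra over a commutative ring $S$ is a non-negative $S$-complex $(\mathbf{D},\partial)$ with a morphism of complexes $\mathbf{D}\otimes_S\mathbf{D}\to\mathbf{D}$, $a\otimes b\mapsto ab$, which is unital, associative, and graded commutative ($ab=(-1)^{|a||b|}ba$, and $a^2=0$ when $|a|$ is odd); being a morphism of complexes amounts to the Leibniz rule $\partial(ab)=\partial(a)b+(-1)^{|a|}a\partial(b)$. A minimal Tate resolution of $k$ is a minimal free resolution $\mathbf{F}$ of $k$ over $R$ (finitely generated free modules, $\partial(F_i)\subseteq\mathfrak{m}F_{i-1}$) carrying a DG algebra structure over $R$. $R^{\mathsf g}=\bigoplus_{i\ge0}\mathfrak{m}^i/\mathfrak{m}^{i+1}$. The linear part $\operatorname{lin}^R(\mathbf{F})$ is the associated graded complex of the filtration $(\mathfrak{F}^p\mathbf{F})_i=\mathfrak{m}^{p-i}F_i$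 ($\mathfrak{m}^j=R$ for $j\le0$); it is a complex of graded free $R^{\mathsf g}$-modules with $\operatorname{lin}^R_n(\mathbf{F})=F_n^{\mathsf g}(-n)$, $F_n^{\mathsf g}=\bigoplus_{i\ge0}\mathfrak{m}^iF_n/\mathfrak{m}^{i+1}F_n$, and differential sending the class of $x\in\mathfrak{m}^iF_n$ to the class of $\partial(x)$ in $\mathfrak{m}^{i+1}F_{n-1}/\mathfrak{m}^{i+2}F_{n-1}$. *)

theory Defs
  imports "HOL-Algebra.Algebra"
begin

definition linear_map ::
  "('s,'c) ring_scheme \<Rightarrow> ('s,'a) module \<Rightarrow> ('s,'b) module \<Rightarrow> ('a \<Rightarrow> 'b) \<Rightarrow> bool" where
  "linear_map S M N f \<longleftrightarrow>
     f \<in> carrier M \<rightarrow> carrier N \<and>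
     (\<forall>x\<in>carrier M. \<forall>y\<in>carrier M. f (x \<oplus>\<^bsub>M\<^esub> y) = f x \<oplus>\<^bsub>N\<^esub> f y) \<and>
     (\<forall>s\<in>carrier S. \<forall>x\<in>carrier M. f (s \<odot>\<^bsub>M\<^esub> x) = s \<odot>\<^bsub>N\<^esub> f x)"

definition gen_submodule :: "('s,'c) ring_scheme \<Rightarrow> ('s,'a) module \<Rightarrow> 'a set \<Rightarrow> 'a set" where
  "gen_submodule S M A = \<Inter>{H. submodule H S M \<and> A \<subseteq> H}"

definition ideal_smult :: "('s,'c) ring_scheme \<Rightarrow> ('s,'a) module \<Rightarrow> 's set \<Rightarrow> 'a set \<Rightarrow> 'a set" where
  "ideal_smult S M I N = gen_submodule S M {s \<odot>\<^bsub>M\<^esub> x | s x. s \<in> I \<and> x \<in> N}"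

fun mpow_mod :: "('s,'c) ring_scheme \<Rightarrow> ('s,'a) module \<Rightarrow> 's set \<Rightarrow> nat \<Rightarrow> 'a set" where
  "mpow_mod S M I 0 = carrier M"
| "mpow_mod S M I (Suc i) = ideal_smult S M I (mpow_mod S M I i)"

definition ring_module :: "('r,'c) ring_scheme \<Rightarrow> ('r,'r) module" where
  "ring_module R = \<lparr>partial_object.carrier = carrier R, monoid.mult = monoid.mult R, monoid.one = monoid.one R, ring.zero = ring.zero R,
                    ring.add = ring.add R, smult = monoid.mult R\<rparr>"

definition residue_module :: "('r,'c) ring_scheme \<Rightarrow> 'r set \<Rightarrow> ('r, 'r set) module" where
  "residue_module R m = \<lparr>partial_object.carrier = carrier (R Quot m), monoid.mult = monoid.mult (R Quot m),
      monoid.one = monoid.one (R Quot m), ring.zero = ring.zero (R Quot m), ring.add = ring.add (R Quot m),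
      smult = (\<lambda>r C. (a_r_coset R m r) \<otimes>\<^bsub>R Quot m\<^esub> C)\<rparr>"

definition cls :: "('s,'a) module \<Rightarrow> 'a set \<Rightarrow> 'a \<Rightarrow> 'a set" where
  "cls M N x = (\<lambda>z. x \<oplus>\<^bsub>M\<^esub> z) ` N"

definition fin_free :: "('s,'c) ring_scheme \<Rightarrow> ('s,'a) module \<Rightarrow> bool" where
  "fin_free S M \<longleftrightarrow> (\<exists>B. finite B \<and> B \<subseteq> carrier M \<and>
     (\<forall>x\<in>carrier M. \<exists>!c. c \<in> B \<rightarrow>\<^sub>E carrier S \<and>
         x = finsum M (\<lambda>b. c b \<odot>\<^bsub>M\<^esub> b) B))"

text \<open>A non-negative S-complex (D n, d n) with d (Suc n) : D (Suc n) -> D n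
  (d 0 is the zero map to D(-1) = 0 and carries no data), with a product
  mu n m : D n x D m -> D (n+m) which is S-bilinear, unital (unit e in D 0),
  associative, graded commutative, squares odd elements to 0, and satisfies
  the Leibniz rule (i.e. is a morphism of complexes D (x) D -> D).\<close>

definition sgn_mod :: "('s,'a) module \<Rightarrow> nat \<Rightarrow> 'a \<Rightarrow> 'a" where
  "sgn_mod M k x = (if even k then x else \<ominus>\<^bsub>M\<^esub> x)"

definition dg_algebra ::
  "('s,'c) ring_scheme \<Rightarrow> (nat \<Rightarrow> ('s,'a) module) \<Rightarrow> (nat \<Rightarrow> 'a \<Rightarrow> 'a)
    \<Rightarrow> (nat \<Rightarrow> nat \<Rightarrow> 'a \<Rightarrow> 'a \<Rightarrow> 'a) \<Rightarrow> 'a \<Rightarrow> bool" where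
  "dg_algebra S D d mu e \<longleftrightarrow>
     cring S \<and> (\<forall>n. module S (D n)) \<and>
     (\<forall>n. linear_map S (D (Suc n)) (D n) (d (Suc n))) \<and>
     (\<forall>n. \<forall>x\<in>carrier (D (Suc (Suc n))). d (Suc n) (d (Suc (Suc n)) x) = \<zero>\<^bsub>D n\<^esub>) \<and>
     (\<forall>n m. \<forall>x\<in>carrier (D n). \<forall>y\<in>carrier (D m). mu n m x y \<in> carrier (D (n+m))) \<and>
     (\<forall>n m. \<forall>x\<in>carrier (D n). \<forall>x'\<in>carrier (D n). \<forall>y\<in>carrier (D m).
        mu n m (x \<oplus>\<^bsub>D n\<^esub> x') y = mu n m x y \<oplus>\<^bsub>D (n+m)\<^esub> mu n m x' y) \<and>
     (\<forall>n m. \<forall>x\<in>carrier (D n). \<forall>y\<in>carrier (D m). \<forall>y'\<in>carrier (D m).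
        mu n m x (y \<oplus>\<^bsub>D m\<^esub> y') = mu n m x y \<oplus>\<^bsub>D (n+m)\<^esub> mu n m x y') \<and>
     (\<forall>n m. \<forall>s\<in>carrier S. \<forall>x\<in>carrier (D n). \<forall>y\<in>carrier (D m).
        mu n m (s \<odot>\<^bsub>D n\<^esub> x) y = s \<odot>\<^bsub>D (n+m)\<^esub> mu n m x y \<and>
        mu n m x (s \<odot>\<^bsub>D m\<^esub> y) = s \<odot>\<^bsub>D (n+m)\<^esub> mu n m x y) \<and>
     e \<in> carrier (D 0) \<and>
     (\<forall>n. \<forall>x\<in>carrier (D n). mu 0 n e x = x \<and> mu n 0 x e = x) \<and>
     (\<forall>n m k. \<forall>x\<in>carrier (D n). \<forall>y\<in>carrier (D m). \<forall>z\<in>carrier (D k).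
        mu (n+m) k (mu n m x y) z = mu n (m+k) x (mu m k y z)) \<and>
     (\<forall>n m. \<forall>x\<in>carrier (D n). \<forall>y\<in>carrier (D m).
        mu n m x y = sgn_mod (D (n+m)) (n*m) (mu m n y x)) \<and>
     (\<forall>n. odd n \<longrightarrow> (\<forall>x\<in>carrier (D n). mu n n x x = \<zero>\<^bsub>D (n+n)\<^esub>)) \<and>
     (\<forall>n m. 0 < n + m \<longrightarrow> (\<forall>x\<in>carrier (D n). \<forall>y\<in>carrier (D m).
        d (n+m) (mu n m x y) =
          (if n = 0 then \<zero>\<^bsub>D (n+m-1)\<^esub> else mu (n-1) m (d n x) y)
          \<oplus>\<^bsub>D (n+m-1)\<^esub>
          (if m = 0 then \<zero>\<^bsub>D (n+m-1)\<^esub> else sgn_mod (D (n+m-1)) n (mu n (m-1) x (d m y)))))"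

definition noetherian_local :: "('r,'c) ring_scheme \<Rightarrow> 'r set \<Rightarrow> bool" where
  "noetherian_local R m \<longleftrightarrow> cring R \<and> noetherian_ring R \<and> maximalideal m R \<and>
     (\<forall>I. maximalideal I R \<longrightarrow> I = m)"

definition minimal_free_resolution ::
  "('r,'c) ring_scheme \<Rightarrow> 'r set \<Rightarrow> (nat \<Rightarrow> ('r,'f) module) \<Rightarrow> (nat \<Rightarrow> 'f \<Rightarrow> 'f) \<Rightarrow> bool" where
  "minimal_free_resolution R m F d \<longleftrightarrow>
     (\<forall>n. module R (F n) \<and> fin_free R (F n)) \<and>
     (\<forall>n. linear_map R (F (Suc n)) (F n) (d (Suc n))) \<and>
     (\<forall>n. \<forall>x\<in>carrier (F (Suc (Suc n))). d (Suc n) (d (Suc (Suc n)) x) = \<zero>\<^bsub>F n\<^esub>) \<and>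
     (\<forall>n. {x\<in>carrier (F (Suc n)). d (Suc n) x = \<zero>\<^bsub>F n\<^esub>}
            = d (Suc (Suc n)) ` carrier (F (Suc (Suc n)))) \<and>
     (\<exists>eps. linear_map R (F 0) (residue_module R m) eps \<and>
        eps ` carrier (F 0) = carrier (residue_module R m) \<and>
        {x\<in>carrier (F 0). eps x = \<zero>\<^bsub>residue_module R m\<^esub>} = d 1 ` carrier (F 1)) \<and>
     (\<forall>n. d (Suc n) ` carrier (F (Suc n)) \<subseteq> mpow_mod R (F n) m 1)"

definition minimal_tate_resolution ::
  "('r,'c) ring_scheme \<Rightarrow> 'r set \<Rightarrow> (nat \<Rightarrow> ('r,'f) module) \<Rightarrow> (nat \<Rightarrow> 'f \<Rightarrow> 'f)
     \<Rightarrow> (nat \<Rightarrow> nat \<Rightarrow> 'f \<Rightarrow> 'f \<Rightarrow> 'f) \<Rightarrow> 'f \<Rightarrow> bool" where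
  "minimal_tate_resolution R m F d mu e \<longleftrightarrow>
     minimal_free_resolution R m F d \<and> dg_algebra R F d mu e"

text \<open>Elements of an associated graded module gr_I(M) = sum_i I^i M / I^(i+1) M are
  represented as functions i \<mapsto> (class in I^i M / I^(i+1) M), almost all zero.\<close>

definition gr_carrier :: "('s,'c) ring_scheme \<Rightarrow> ('s,'a) module \<Rightarrow> 's set \<Rightarrow> (nat \<Rightarrow> 'a set) set" where
  "gr_carrier S M I = {c. (\<forall>i. \<exists>x\<in>mpow_mod S M I i. c i = cls M (mpow_mod S M I (Suc i)) x) \<and>
                          finite {i. c i \<noteq> cls M (mpow_mod S M I (Suc i)) \<zero>\<^bsub>M\<^esub>}}"

definition gr_rep :: "('s,'c) ring_scheme \<Rightarrow> ('s,'a) module \<Rightarrow> 's set \<Rightarrow> (nat \<Rightarrow> 'a set) \<Rightarrow> nat \<Rightarrow> 'a" where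
  "gr_rep S M I c i = (SOME x. x \<in> mpow_mod S M I i \<and> c i = cls M (mpow_mod S M I (Suc i)) x)"

definition gr_cls :: "('s,'c) ring_scheme \<Rightarrow> ('s,'a) module \<Rightarrow> 's set \<Rightarrow> nat \<Rightarrow> 'a \<Rightarrow> (nat \<Rightarrow> 'a set)" where
  "gr_cls S M I i x = (\<lambda>j. cls M (mpow_mod S M I (Suc j)) (if j = i then x else \<zero>\<^bsub>M\<^esub>))"

definition gr_add :: "('s,'c) ring_scheme \<Rightarrow> ('s,'a) module \<Rightarrow> 's set
    \<Rightarrow> (nat \<Rightarrow> 'a set) \<Rightarrow> (nat \<Rightarrow> 'a set) \<Rightarrow> (nat \<Rightarrow> 'a set)" where
  "gr_add S M I a b = (\<lambda>k. cls M (mpow_mod S M I (Suc k)) (gr_rep S M I a k \<oplus>\<^bsub>M\<^esub> gr_rep S M I b k))"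

definition assoc_graded :: "('r,'c) ring_scheme \<Rightarrow> 'r set \<Rightarrow> (nat \<Rightarrow> 'r set) ring" where
  "assoc_graded R m =
     (let RM = ring_module R in
     \<lparr>partial_object.carrier = gr_carrier R RM m,
      monoid.mult = (\<lambda>a b. \<lambda>k. cls RM (mpow_mod R RM m (Suc k))
                 (finsum R (\<lambda>i. gr_rep R RM m a i \<otimes>\<^bsub>R\<^esub> gr_rep R RM m b (k - i)) {..k})),
      monoid.one = gr_cls R RM m 0 \<one>\<^bsub>R\<^esub>,
      ring.zero = gr_cls R RM m 0 \<zero>\<^bsub>R\<^esub>,
      ring.add = gr_add R RM m\<rparr>)"

text \<open>The components lin_n(F) = F_n^g(-n) of the linear part, as R^g-modules.\<close>
definition lin_mod :: "('r,'c) ring_scheme \<Rightarrow> 'r set \<Rightarrow> (nat \<Rightarrow> ('r,'f) module)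
    \<Rightarrow> nat \<Rightarrow> (nat \<Rightarrow> 'r set, nat \<Rightarrow> 'f set) module" where
  "lin_mod R m F n =
     \<lparr>partial_object.carrier = gr_carrier R (F n) m,
      monoid.mult = (\<lambda>a b. undefined),
      monoid.one = undefined,
      ring.zero = gr_cls R (F n) m 0 \<zero>\<^bsub>F n\<^esub>,
      ring.add = gr_add R (F n) m,
      smult = (\<lambda>a c. \<lambda>k. cls (F n) (mpow_mod R (F n) m (Suc k))
                 (finsum (F n) (\<lambda>i. gr_rep R (ring_module R) m a i \<odot>\<^bsub>F n\<^esub> gr_rep R (F n) m c (k - i)) {..k}))\<rparr>"

text \<open>The differential of lin(F): the class of x in m^i F_n goes to the class of
  d x in m^(i+1) F_(n-1) / m^(i+2) F_(n-1).\<close>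
definition lin_diff :: "('r,'c) ring_scheme \<Rightarrow> 'r set \<Rightarrow> (nat \<Rightarrow> ('r,'f) module)
    \<Rightarrow> (nat \<Rightarrow> 'f \<Rightarrow> 'f) \<Rightarrow> nat \<Rightarrow> (nat \<Rightarrow> 'f set) \<Rightarrow> (nat \<Rightarrow> 'f set)" where
  "lin_diff R m F d n c =
     (case n of 0 \<Rightarrow> c
      | Suc n' \<Rightarrow> (\<lambda>k. cls (F n') (mpow_mod R (F n') m (Suc k))
           (if k = 0 then \<zero>\<^bsub>F n'\<^esub> else d (Suc n') (gr_rep R (F (Suc n')) m c (k - 1)))))"

end

theory Submission
  imports Defs
begin


lemma gen_submodule_least:
  "submodule H S M \<Longrightarrow> A \<subseteq> H \<Longrightarrow> gen_submodule S M A \<subseteq> H"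
  unfolding gen_submodule_def by blast

lemma gen_submodule_sub:
  assumes "module S M" "A \<subseteq> carrier M"
  shows "submodule (gen_submodule S M A) S M"
proof -
  interpret module S M by fact
  let ?F = "{H. submodule H S M \<and> A \<subseteq> H}"
  have ne: "carrier M \<in> ?F" using carrier_is_submodule assms by auto
  have sub: "\<And>H. H \<in> ?F \<Longrightarrow> H \<subseteq> carrier M" using submoduleE(1) by auto
  show ?thesis unfolding gen_submodule_def
  proof (rule submoduleI)
    show "\<Inter> ?F \<subseteq> carrier M" using ne by blast
    show "\<zero>\<^bsub>M\<^esub> \<in> \<Inter> ?F"
    proof
      fix H assume "H \<in> ?F"
      then interpret submodule H S M by auto
      show "\<zero>\<^bsub>M\<^esub> \<in> H" using subgroup.one_closed[OF subgroup_axioms] by simp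
    qed
    show "\<And>a. a \<in> \<Inter> ?F \<Longrightarrow> \<ominus>\<^bsub>M\<^esub> a \<in> \<Inter> ?F" using submoduleE(3) by blast
    show "\<And>a b. a \<in> \<Inter> ?F \<Longrightarrow> b \<in> \<Inter> ?F \<Longrightarrow> a \<oplus>\<^bsub>M\<^esub> b \<in> \<Inter> ?F" using submoduleE(5) by blast
    show "\<And>a x. a \<in> carrier S \<Longrightarrow> x \<in> \<Inter> ?F \<Longrightarrow> a \<odot>\<^bsub>M\<^esub> x \<in> \<Inter> ?F" using submoduleE(4) by blast
  qed
qed

lemma gen_submodule_incl:
  "A \<subseteq> gen_submodule S M A" unfolding gen_submodule_def by blast


lemma ring_module_simps[simp]:
  "carrier (ring_module S) = carrier S"
  "ring.add (ring_module S) = ring.add S"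
  "ring.zero (ring_module S) = ring.zero S"
  "smult (ring_module S) = monoid.mult S"
  "monoid.mult (ring_module S) = monoid.mult S"
  "monoid.one (ring_module S) = monoid.one S"
  by (simp_all add: ring_module_def)

lemma abelian_group_ring_module:
  assumes "abelian_group S" shows "abelian_group (ring_module S)"
proof -
  interpret abelian_group S by fact
  show ?thesis by (rule abelian_groupI) (auto simp: a_ac l_neg intro: a_inv_closed)
qed

lemma a_inv_ring_module[simp]:
  assumes "cring S" "x \<in> carrier S" shows "a_inv (ring_module S) x = a_inv S x"
proof -
  interpret cring S by fact
  interpret RM: abelian_group "ring_module S" using abelian_group_ring_module abelian_group_axioms by blast
  have "ring.add (ring_module S) (a_inv (ring_module S) x) x = ring.zero (ring_module S)"
    using RM.l_neg[of x] assms by simp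
  then show ?thesis using assms RM.a_inv_closed[of x]
    by (metis (no_types, lifting) RM.a_inv_closed ring_module_simps l_neg minus_unique
        a_inv_closed)
qed

lemma finsum_ring_module[simp]:
  assumes "cring S" "f \<in> A \<rightarrow> carrier S" shows "finsum (ring_module S) f A = finsum S f A"
proof -
  interpret cring S by fact
  interpret RM: abelian_group "ring_module S" using abelian_group_ring_module abelian_group_axioms by blast
  show ?thesis
  proof (cases "finite A")
    case True
    then show ?thesis using assms(2)
    proof (induction A)
      case empty
      then show ?case by simp
    next
      case (insert x F)
      then show ?case by (simp add: finsum_insert RM.finsum_insert)
    qed
  next
    case False
    then show ?thesis by (simp add: finsum_infinite RM.finsum_infinite)
  qed
qed

lemma module_ring_module:
  assumes "cring S" shows "module S (ring_module S)"
proof -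
  interpret cring S by fact
  have ag: "abelian_group (ring_module S)"
    using abelian_group_ring_module abelian_group_axioms by blast
  show ?thesis
    by (rule moduleI[OF assms ag]) (auto simp: l_distr r_distr m_assoc)
qed


locale addhom = G: abelian_group G + H: abelian_group H for G (structure) and H (structure) and f +
  assumes closed: "x \<in> carrier G \<Longrightarrow> f x \<in> carrier H"
  and hadd: "x \<in> carrier G \<Longrightarrow> y \<in> carrier G \<Longrightarrow> f (x \<oplus>\<^bsub>G\<^esub> y) = f x \<oplus>\<^bsub>H\<^esub> f y"
begin

lemma hzero: "f \<zero>\<^bsub>G\<^esub> = \<zero>\<^bsub>H\<^esub>"
proof -
  have "f \<zero>\<^bsub>G\<^esub> = f \<zero>\<^bsub>G\<^esub> \<oplus>\<^bsub>H\<^esub> f \<zero>\<^bsub>G\<^esub>"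
    using hadd[of "\<zero>\<^bsub>G\<^esub>" "\<zero>\<^bsub>G\<^esub>"] by simp
  then show ?thesis using closed[OF G.zero_closed] H.add.l_cancel_one' by simp
qed

lemma hneg: "x \<in> carrier G \<Longrightarrow> f (\<ominus>\<^bsub>G\<^esub> x) = \<ominus>\<^bsub>H\<^esub> f x"
proof -
  assume x: "x \<in> carrier G"
  have "f (\<ominus>\<^bsub>G\<^esub> x) \<oplus>\<^bsub>H\<^esub> f x = \<zero>\<^bsub>H\<^esub>"
    using hadd[of "\<ominus>\<^bsub>G\<^esub> x" x] x hzero by (simp add: G.l_neg)
  from H.minus_equality[OF this closed[OF x] closed[OF G.a_inv_closed[OF x]]] show ?thesis by simp
qed

lemma hminus: "x \<in> carrier G \<Longrightarrow> y \<in> carrier G \<Longrightarrow> f (x \<ominus>\<^bsub>G\<^esub> y) = f x \<ominus>\<^bsub>H\<^esub> f y"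
  by (simp add: a_minus_def hadd hneg)

lemma hsum: "g \<in> A \<rightarrow> carrier G \<Longrightarrow> f (finsum G g A) = finsum H (\<lambda>i. f (g i)) A"
proof (cases "finite A")
  case True
  then show "g \<in> A \<rightarrow> carrier G \<Longrightarrow> ?thesis"
  proof (induction A)
    case empty then show ?case by (simp add: hzero)
  next
    case (insert x F)
    then have "(\<lambda>i. f (g i)) \<in> F \<rightarrow> carrier H" "(\<lambda>i. f (g i)) \<in> insert x F \<rightarrow> carrier H"
      using closed by auto
    moreover have "g \<in> F \<rightarrow> carrier G" "g x \<in> carrier G" using insert by auto
    ultimately show ?case using insert
      by (simp only: G.finsum_insert H.finsum_insert hadd[OF _ G.finsum_closed]) (simp add: hadd G.finsum_closed)
  qed
next
  case False then show ?thesis by (simp add: hzero)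
qed

end

context
  fixes S :: "('s,'c) ring_scheme" and M :: "('s,'a) module" and I :: "'s set"
  assumes modM: "module S M" and Isub: "I \<subseteq> carrier S"
begin

interpretation M: module S M by (rule modM)

lemma mpow_sub: "submodule (mpow_mod S M I i) S M"
proof (induction i)
  case 0 then show ?case by (simp add: M.carrier_is_submodule)
next
  case (Suc i)
  have "{s \<odot>\<^bsub>M\<^esub> x | s x. s \<in> I \<and> x \<in> mpow_mod S M I i} \<subseteq> carrier M"
    using M.submoduleE(1)[OF Suc] Isub by auto
  then show ?case unfolding mpow_mod.simps ideal_smult_def by (rule gen_submodule_sub[OF modM])
qed

lemma mpow_carrier: "mpow_mod S M I i \<subseteq> carrier M"
  using M.submoduleE(1)[OF mpow_sub] .

lemma mpow_carrierD: "x \<in> mpow_mod S M I i \<Longrightarrow> x \<in> carrier M"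
  using mpow_carrier by blast

lemma mpow_zero[simp]: "\<zero>\<^bsub>M\<^esub> \<in> mpow_mod S M I i"
  using subgroup.one_closed[OF submodule.axioms(1)[OF mpow_sub]] by simp

lemma mpow_add: "x \<in> mpow_mod S M I i \<Longrightarrow> y \<in> mpow_mod S M I i \<Longrightarrow> x \<oplus>\<^bsub>M\<^esub> y \<in> mpow_mod S M I i"
  using M.submoduleE(5)[OF mpow_sub] by blast

lemma mpow_neg: "x \<in> mpow_mod S M I i \<Longrightarrow> \<ominus>\<^bsub>M\<^esub> x \<in> mpow_mod S M I i"
  using M.submoduleE(3)[OF mpow_sub] by blast

lemma mpow_minus: "x \<in> mpow_mod S M I i \<Longrightarrow> y \<in> mpow_mod S M I i \<Longrightarrow> x \<ominus>\<^bsub>M\<^esub> y \<in> mpow_mod S M I i"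
  by (simp add: a_minus_def mpow_add mpow_neg)

lemma mpow_smult: "s \<in> carrier S \<Longrightarrow> x \<in> mpow_mod S M I i \<Longrightarrow> s \<odot>\<^bsub>M\<^esub> x \<in> mpow_mod S M I i"
  using M.submoduleE(4)[OF mpow_sub] by blast

lemma mpow_gen: "s \<in> I \<Longrightarrow> x \<in> mpow_mod S M I i \<Longrightarrow> s \<odot>\<^bsub>M\<^esub> x \<in> mpow_mod S M I (Suc i)"
  unfolding mpow_mod.simps ideal_smult_def
  by (rule subsetD[OF gen_submodule_incl]) auto

lemma mpow_Suc_sub: "mpow_mod S M I (Suc i) \<subseteq> mpow_mod S M I i"
  unfolding mpow_mod.simps ideal_smult_def
proof (rule gen_submodule_least[OF mpow_sub], rule subsetI)
  fix y assume "y \<in> {s \<odot>\<^bsub>M\<^esub> x |s x. s \<in> I \<and> x \<in> mpow_mod S M I i}"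
  then obtain s x where "y = s \<odot>\<^bsub>M\<^esub> x" "s \<in> I" "x \<in> mpow_mod S M I i" by auto
  then show "y \<in> mpow_mod S M I i" using mpow_smult Isub by auto
qed

lemma mpow_anti: "i \<le> j \<Longrightarrow> mpow_mod S M I j \<subseteq> mpow_mod S M I i"
proof (induction j)
  case 0 then show ?case by simp
next
  case (Suc j) then show ?case using mpow_Suc_sub[of j] by (cases "i = Suc j") auto
qed

lemma mpow_sum: "finite A \<Longrightarrow> g \<in> A \<rightarrow> mpow_mod S M I i \<Longrightarrow> finsum M g A \<in> mpow_mod S M I i"
proof (induction A rule: finite_induct)
  case empty then show ?case by simp
next
  case (insert x F)
  have "g \<in> F \<rightarrow> carrier M" "g x \<in> carrier M" using insert(4) mpow_carrier by auto
  then show ?case using insert by (simp add: M.finsum_insert mpow_add)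
qed

end


context abelian_group begin
lemma gL1: "y \<in> carrier G \<Longrightarrow> z \<in> carrier G \<Longrightarrow> (y \<oplus> z) \<ominus> y = z"
  by (simp add: a_minus_def a_comm r_neg1)
lemma gL2: "x \<in> carrier G \<Longrightarrow> y \<in> carrier G \<Longrightarrow> \<ominus> (x \<ominus> y) = y \<ominus> x"
  by (simp add: a_minus_def minus_add minus_minus a_comm)
lemma gL3: "x \<in> carrier G \<Longrightarrow> x \<ominus> \<zero> = x"
  by (simp add: a_minus_def)
lemma gL4: "x \<in> carrier G \<Longrightarrow> x \<ominus> x = \<zero>"
  by (simp add: a_minus_def r_neg)
lemma gL5: "x \<in> carrier G \<Longrightarrow> y \<in> carrier G \<Longrightarrow> z \<in> carrier G \<Longrightarrow> (x \<ominus> y) \<oplus> (y \<ominus> z) = x \<ominus> z"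
  by (simp add: a_minus_def a_assoc r_neg2 r_neg1)
lemma gL6: "a \<in> carrier G \<Longrightarrow> b \<in> carrier G \<Longrightarrow> c \<in> carrier G \<Longrightarrow> d \<in> carrier G \<Longrightarrow>
   (a \<oplus> b) \<ominus> (c \<oplus> d) = (a \<ominus> c) \<oplus> (b \<ominus> d)"
  by (simp add: a_minus_def minus_add a_ac)
lemma gL7: "a \<in> carrier G \<Longrightarrow> b \<in> carrier G \<Longrightarrow> \<ominus> a \<ominus> \<ominus> b = \<ominus> (a \<ominus> b)"
  by (simp add: a_minus_def minus_add a_comm)
lemma gL9: "x \<in> carrier G \<Longrightarrow> y \<in> carrier G \<Longrightarrow> y \<oplus> (x \<ominus> y) = x"
  by (simp add: a_minus_def a_comm r_neg2 a_lcomm r_neg)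
lemma gL8: "u \<in> carrier G \<Longrightarrow> v \<in> carrier G \<Longrightarrow> z \<in> carrier G \<Longrightarrow> u \<oplus> z = v \<oplus> ((u \<ominus> v) \<oplus> z)"
  by (simp only: a_assoc[symmetric] gL9 minus_closed)
lemma gL10: "x \<in> carrier G \<Longrightarrow> y \<in> carrier G \<Longrightarrow> z \<in> carrier G \<Longrightarrow> x = y \<oplus> z \<Longrightarrow> x \<ominus> y = z"
  by (simp only: gL1)
lemma finsum_diff:
  assumes "a \<in> A \<rightarrow> carrier G" "b \<in> A \<rightarrow> carrier G"
  shows "finsum G (\<lambda>i. a i \<ominus> b i) A = finsum G a A \<ominus> finsum G b A"
proof (cases "finite A")
  case True
  then show ?thesis using assms
  proof (induction A)
    case empty
    have "\<ominus> \<zero> = \<zero>" by (rule minus_equality) simp_all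
    then show ?case using gL4[of "\<zero>"] by simp
  next
    case (insert x F)
    then have a: "a \<in> F \<rightarrow> carrier G" "a x \<in> carrier G" and b: "b \<in> F \<rightarrow> carrier G" "b x \<in> carrier G" by auto
    have c: "(\<lambda>i. a i \<ominus> b i) \<in> F \<rightarrow> carrier G" using a b by auto
    have "finsum G (\<lambda>i. a i \<ominus> b i) (insert x F) = (a x \<ominus> b x) \<oplus> finsum G (\<lambda>i. a i \<ominus> b i) F"
      using insert c a b by (simp add: finsum_insert)
    also have "\<dots> = (a x \<ominus> b x) \<oplus> (finsum G a F \<ominus> finsum G b F)" using insert a b by simp
    also have "\<dots> = (a x \<oplus> finsum G a F) \<ominus> (b x \<oplus> finsum G b F)"
      using gL6[of "a x" "finsum G a F" "b x" "finsum G b F"] a b finsum_closed by simp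
    also have "\<dots> = finsum G a (insert x F) \<ominus> finsum G b (insert x F)"
      using insert a b by (simp add: finsum_insert)
    finally show ?case .
  qed
next
  case False then show ?thesis using gL4[of "\<zero>"] by simp
qed

lemma finsum_neg:
  assumes "a \<in> A \<rightarrow> carrier G"
  shows "finsum G (\<lambda>i. \<ominus> a i) A = \<ominus> finsum G a A"
proof -
  have "finsum G (\<lambda>i. \<zero> \<ominus> a i) A = finsum G (\<lambda>i. \<zero>) A \<ominus> finsum G a A"
    using finsum_diff[of "\<lambda>i. \<zero>" A a] assms by auto
  moreover have "finsum G (\<lambda>i. \<zero> \<ominus> a i) A = finsum G (\<lambda>i. \<ominus> a i) A"
    using assms by (intro finsum_cong) (auto simp: a_minus_def Pi_iff)
  ultimately show ?thesis using finsum_closed[OF assms] by (simp add: a_minus_def)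
qed

end


declare mpow_mod.simps(2)[simp del]

locale bilin =
  fixes S :: "('s,'c) ring_scheme" and A :: "('s,'a) module" and B :: "('s,'b) module"
    and P :: "('s,'p) module" and \<beta> :: "'a \<Rightarrow> 'b \<Rightarrow> 'p" and I :: "'s set"
  assumes modA: "module S A" and modB: "module S B" and modP: "module S P"
    and Isub: "I \<subseteq> carrier S"
    and bclosed: "\<And>x y. x \<in> carrier A \<Longrightarrow> y \<in> carrier B \<Longrightarrow> \<beta> x y \<in> carrier P"
    and addL: "\<And>x x' y. x \<in> carrier A \<Longrightarrow> x' \<in> carrier A \<Longrightarrow> y \<in> carrier B \<Longrightarrow>
        \<beta> (x \<oplus>\<^bsub>A\<^esub> x') y = \<beta> x y \<oplus>\<^bsub>P\<^esub> \<beta> x' y"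
    and addR: "\<And>x y y'. x \<in> carrier A \<Longrightarrow> y \<in> carrier B \<Longrightarrow> y' \<in> carrier B \<Longrightarrow>
        \<beta> x (y \<oplus>\<^bsub>B\<^esub> y') = \<beta> x y \<oplus>\<^bsub>P\<^esub> \<beta> x y'"
    and smL: "\<And>s x y. s \<in> carrier S \<Longrightarrow> x \<in> carrier A \<Longrightarrow> y \<in> carrier B \<Longrightarrow>
        \<beta> (s \<odot>\<^bsub>A\<^esub> x) y = s \<odot>\<^bsub>P\<^esub> \<beta> x y"
    and smR: "\<And>s x y. s \<in> carrier S \<Longrightarrow> x \<in> carrier A \<Longrightarrow> y \<in> carrier B \<Longrightarrow>
        \<beta> x (s \<odot>\<^bsub>B\<^esub> y) = s \<odot>\<^bsub>P\<^esub> \<beta> x y"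
begin

sublocale A: module S A by (rule modA)
sublocale B: module S B by (rule modB)
sublocale P: module S P by (rule modP)

lemma hL: "y \<in> carrier B \<Longrightarrow> addhom A P (\<lambda>x. \<beta> x y)"
  by (unfold_locales) (auto simp: bclosed addL)

lemma hR: "x \<in> carrier A \<Longrightarrow> addhom B P (\<beta> x)"
  by (unfold_locales) (auto simp: bclosed addR)

lemma zeroL[simp]: "y \<in> carrier B \<Longrightarrow> \<beta> \<zero>\<^bsub>A\<^esub> y = \<zero>\<^bsub>P\<^esub>"
  using addhom.hzero[OF hL] .
lemma zeroR[simp]: "x \<in> carrier A \<Longrightarrow> \<beta> x \<zero>\<^bsub>B\<^esub> = \<zero>\<^bsub>P\<^esub>"
  using addhom.hzero[OF hR] .
lemma negL: "x \<in> carrier A \<Longrightarrow> y \<in> carrier B \<Longrightarrow> \<beta> (\<ominus>\<^bsub>A\<^esub> x) y = \<ominus>\<^bsub>P\<^esub> \<beta> x y"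
  using addhom.hneg[OF hL] .
lemma negR: "x \<in> carrier A \<Longrightarrow> y \<in> carrier B \<Longrightarrow> \<beta> x (\<ominus>\<^bsub>B\<^esub> y) = \<ominus>\<^bsub>P\<^esub> \<beta> x y"
  using addhom.hneg[OF hR] .
lemma minusL: "x \<in> carrier A \<Longrightarrow> x' \<in> carrier A \<Longrightarrow> y \<in> carrier B \<Longrightarrow>
   \<beta> (x \<ominus>\<^bsub>A\<^esub> x') y = \<beta> x y \<ominus>\<^bsub>P\<^esub> \<beta> x' y"
  using addhom.hminus[OF hL] .
lemma minusR: "x \<in> carrier A \<Longrightarrow> y \<in> carrier B \<Longrightarrow> y' \<in> carrier B \<Longrightarrow>
   \<beta> x (y \<ominus>\<^bsub>B\<^esub> y') = \<beta> x y \<ominus>\<^bsub>P\<^esub> \<beta> x y'"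
  using addhom.hminus[OF hR] .
lemma sumL: "g \<in> K \<rightarrow> carrier A \<Longrightarrow> y \<in> carrier B \<Longrightarrow>
   \<beta> (finsum A g K) y = finsum P (\<lambda>i. \<beta> (g i) y) K"
  using addhom.hsum[OF hL] by blast
lemma sumR: "g \<in> K \<rightarrow> carrier B \<Longrightarrow> x \<in> carrier A \<Longrightarrow>
   \<beta> x (finsum B g K) = finsum P (\<lambda>i. \<beta> x (g i)) K"
  using addhom.hsum[OF hR] by blast

lemma filt0: "x \<in> carrier A \<Longrightarrow> y \<in> mpow_mod S B I j \<Longrightarrow> \<beta> x y \<in> mpow_mod S P I j"
proof (induction j arbitrary: y)
  case 0 then show ?case by (simp add: bclosed)
next
  case (Suc j)
  let ?H = "{y \<in> carrier B. \<beta> x y \<in> mpow_mod S P I (Suc j)}"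
  have sub: "submodule ?H S B"
  proof (rule B.submoduleI)
    show "\<zero>\<^bsub>B\<^esub> \<in> ?H" using Suc.prems(1) mpow_zero[OF modP Isub] by simp
    show "\<And>a. a \<in> ?H \<Longrightarrow> \<ominus>\<^bsub>B\<^esub> a \<in> ?H"
      using Suc.prems(1) negR mpow_neg[OF modP Isub] by simp
    show "\<And>a b. a \<in> ?H \<Longrightarrow> b \<in> ?H \<Longrightarrow> a \<oplus>\<^bsub>B\<^esub> b \<in> ?H"
      using Suc.prems(1) addR mpow_add[OF modP Isub] by simp
    show "\<And>a z. a \<in> carrier S \<Longrightarrow> z \<in> ?H \<Longrightarrow> a \<odot>\<^bsub>B\<^esub> z \<in> ?H"
      using Suc.prems(1) smR mpow_smult[OF modP Isub] by simp
  qed auto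
  have gens: "{s \<odot>\<^bsub>B\<^esub> z |s z. s \<in> I \<and> z \<in> mpow_mod S B I j} \<subseteq> ?H"
  proof (rule subsetI)
    fix w assume "w \<in> {s \<odot>\<^bsub>B\<^esub> z |s z. s \<in> I \<and> z \<in> mpow_mod S B I j}"
    then obtain s z where w: "w = s \<odot>\<^bsub>B\<^esub> z" "s \<in> I" "z \<in> mpow_mod S B I j" by auto
    have s: "s \<in> carrier S" using w Isub by auto
    have z: "z \<in> carrier B" using w mpow_carrierD[OF modB Isub] by auto
    have "\<beta> x w = s \<odot>\<^bsub>P\<^esub> \<beta> x z" using w s z Suc.prems(1) smR by simp
    moreover have "\<beta> x z \<in> mpow_mod S P I j" using Suc.IH[OF Suc.prems(1) w(3)] .
    ultimately show "w \<in> ?H" using mpow_gen[OF modP Isub w(2)] w s z by simp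
  qed
  have "mpow_mod S B I (Suc j) = gen_submodule S B {s \<odot>\<^bsub>B\<^esub> z |s z. s \<in> I \<and> z \<in> mpow_mod S B I j}"
    by (simp add: mpow_mod.simps ideal_smult_def)
  then have "mpow_mod S B I (Suc j) \<subseteq> ?H"
    using gen_submodule_least[OF sub gens] by simp
  then show ?case using Suc.prems(2) by auto
qed

lemma filt: "x \<in> mpow_mod S A I i \<Longrightarrow> y \<in> mpow_mod S B I j \<Longrightarrow> \<beta> x y \<in> mpow_mod S P I (i + j)"
proof (induction i arbitrary: x)
  case 0 then show ?case using filt0 by simp
next
  case (Suc i)
  have yB: "y \<in> carrier B" using Suc.prems(2) mpow_carrierD[OF modB Isub] by auto
  let ?H = "{x \<in> carrier A. \<beta> x y \<in> mpow_mod S P I (Suc i + j)}"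
  have sub: "submodule ?H S A"
  proof (rule A.submoduleI)
    show "\<zero>\<^bsub>A\<^esub> \<in> ?H" using yB mpow_zero[OF modP Isub] by simp
    show "\<And>a. a \<in> ?H \<Longrightarrow> \<ominus>\<^bsub>A\<^esub> a \<in> ?H"
      using yB negL mpow_neg[OF modP Isub] by simp
    show "\<And>a b. a \<in> ?H \<Longrightarrow> b \<in> ?H \<Longrightarrow> a \<oplus>\<^bsub>A\<^esub> b \<in> ?H"
      using yB addL mpow_add[OF modP Isub] by simp
    show "\<And>a z. a \<in> carrier S \<Longrightarrow> z \<in> ?H \<Longrightarrow> a \<odot>\<^bsub>A\<^esub> z \<in> ?H"
      using yB smL mpow_smult[OF modP Isub] by simp
  qed auto
  have gens: "{s \<odot>\<^bsub>A\<^esub> z |s z. s \<in> I \<and> z \<in> mpow_mod S A I i} \<subseteq> ?H"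
  proof (rule subsetI)
    fix w assume "w \<in> {s \<odot>\<^bsub>A\<^esub> z |s z. s \<in> I \<and> z \<in> mpow_mod S A I i}"
    then obtain s z where w: "w = s \<odot>\<^bsub>A\<^esub> z" "s \<in> I" "z \<in> mpow_mod S A I i" by auto
    have s: "s \<in> carrier S" using w Isub by auto
    have z: "z \<in> carrier A" using w mpow_carrierD[OF modA Isub] by auto
    have "\<beta> w y = s \<odot>\<^bsub>P\<^esub> \<beta> z y" using w s z yB smL by simp
    moreover have "\<beta> z y \<in> mpow_mod S P I (i + j)" using Suc.IH[OF w(3) Suc.prems(2)] .
    ultimately show "w \<in> ?H" using mpow_gen[OF modP Isub w(2)] w s z by simp
  qed
  have "mpow_mod S A I (Suc i) = gen_submodule S A {s \<odot>\<^bsub>A\<^esub> z |s z. s \<in> I \<and> z \<in> mpow_mod S A I i}"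
    by (simp add: mpow_mod.simps ideal_smult_def)
  then have "mpow_mod S A I (Suc i) \<subseteq> ?H"
    using gen_submodule_least[OF sub gens] by simp
  then show ?case using Suc.prems(1) by auto
qed

end

lemma linear_filt:
  assumes modM: "module S M" and modN: "module S N" and Isub: "I \<subseteq> carrier S"
    and lin: "linear_map S M N L"
    and base: "L ` carrier M \<subseteq> mpow_mod S N I k"
  shows "x \<in> mpow_mod S M I i \<Longrightarrow> L x \<in> mpow_mod S N I (i + k)"
proof (induction i arbitrary: x)
  case 0 then show ?case using base by auto
next
  case (Suc i)
  interpret M: module S M by fact
  interpret N: module S N by fact
  have Lc: "\<And>x. x \<in> carrier M \<Longrightarrow> L x \<in> carrier N" using lin unfolding linear_map_def by auto
  have La: "\<And>x y. x \<in> carrier M \<Longrightarrow> y \<in> carrier M \<Longrightarrow> L (x \<oplus>\<^bsub>M\<^esub> y) = L x \<oplus>\<^bsub>N\<^esub> L y"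
    using lin unfolding linear_map_def by auto
  have Ls: "\<And>s x. s \<in> carrier S \<Longrightarrow> x \<in> carrier M \<Longrightarrow> L (s \<odot>\<^bsub>M\<^esub> x) = s \<odot>\<^bsub>N\<^esub> L x"
    using lin unfolding linear_map_def by auto
  interpret h: addhom M N L by unfold_locales (auto simp: Lc La)
  let ?H = "{x \<in> carrier M. L x \<in> mpow_mod S N I (Suc i + k)}"
  have sub: "submodule ?H S M"
  proof (rule M.submoduleI)
    show "\<zero>\<^bsub>M\<^esub> \<in> ?H" using h.hzero mpow_zero[OF modN Isub] by simp
    show "\<And>a. a \<in> ?H \<Longrightarrow> \<ominus>\<^bsub>M\<^esub> a \<in> ?H"
      using h.hneg mpow_neg[OF modN Isub] by simp
    show "\<And>a b. a \<in> ?H \<Longrightarrow> b \<in> ?H \<Longrightarrow> a \<oplus>\<^bsub>M\<^esub> b \<in> ?H"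
      using La mpow_add[OF modN Isub] by simp
    show "\<And>a z. a \<in> carrier S \<Longrightarrow> z \<in> ?H \<Longrightarrow> a \<odot>\<^bsub>M\<^esub> z \<in> ?H"
      using Ls mpow_smult[OF modN Isub] by simp
  qed auto
  have gens: "{s \<odot>\<^bsub>M\<^esub> z |s z. s \<in> I \<and> z \<in> mpow_mod S M I i} \<subseteq> ?H"
  proof (rule subsetI)
    fix w assume "w \<in> {s \<odot>\<^bsub>M\<^esub> z |s z. s \<in> I \<and> z \<in> mpow_mod S M I i}"
    then obtain s z where w: "w = s \<odot>\<^bsub>M\<^esub> z" "s \<in> I" "z \<in> mpow_mod S M I i" by auto
    have s: "s \<in> carrier S" using w Isub by auto
    have z: "z \<in> carrier M" using w mpow_carrierD[OF modM Isub] by auto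
    have "L w = s \<odot>\<^bsub>N\<^esub> L z" using w s z Ls by simp
    moreover have "L z \<in> mpow_mod S N I (i + k)" using Suc.IH[OF w(3)] .
    ultimately show "w \<in> ?H" using mpow_gen[OF modN Isub w(2)] w s z by simp
  qed
  have "mpow_mod S M I (Suc i) = gen_submodule S M {s \<odot>\<^bsub>M\<^esub> z |s z. s \<in> I \<and> z \<in> mpow_mod S M I i}"
    by (simp add: mpow_mod.simps ideal_smult_def)
  then have "mpow_mod S M I (Suc i) \<subseteq> ?H"
    using gen_submodule_least[OF sub gens] by simp
  then show ?case using Suc.prems(1) by auto
qed


definition seqc :: "('s,'c) ring_scheme \<Rightarrow> ('s,'a) module \<Rightarrow> 's set \<Rightarrow> (nat \<Rightarrow> 'a) \<Rightarrow> nat \<Rightarrow> 'a set" where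
  "seqc S M I f = (\<lambda>i. cls M (mpow_mod S M I (Suc i)) (f i))"

definition gseq :: "('s,'c) ring_scheme \<Rightarrow> ('s,'a) module \<Rightarrow> 's set \<Rightarrow> (nat \<Rightarrow> 'a) \<Rightarrow> bool" where
  "gseq S M I f \<longleftrightarrow> (\<forall>i. f i \<in> mpow_mod S M I i) \<and> (\<exists>K. \<forall>i\<ge>K. f i \<in> mpow_mod S M I (Suc i))"

definition eqv :: "('s,'c) ring_scheme \<Rightarrow> ('s,'a) module \<Rightarrow> 's set \<Rightarrow> (nat \<Rightarrow> 'a) \<Rightarrow> (nat \<Rightarrow> 'a) \<Rightarrow> bool" where
  "eqv S M I f g \<longleftrightarrow> (\<forall>i. f i \<in> mpow_mod S M I i \<and> g i \<in> mpow_mod S M I i \<and>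
      f i \<ominus>\<^bsub>M\<^esub> g i \<in> mpow_mod S M I (Suc i))"

definition delta :: "('s,'a) module \<Rightarrow> nat \<Rightarrow> 'a \<Rightarrow> nat \<Rightarrow> 'a" where
  "delta M i x = (\<lambda>j. if j = i then x else \<zero>\<^bsub>M\<^esub>)"

lemma gr_cls_seqc: "gr_cls S M I i x = seqc S M I (delta M i x)"
  by (simp add: gr_cls_def seqc_def delta_def fun_eq_iff)

lemma gr_add_seqc: "gr_add S M I a b = seqc S M I (\<lambda>k. gr_rep S M I a k \<oplus>\<^bsub>M\<^esub> gr_rep S M I b k)"
  by (simp add: gr_add_def seqc_def)

locale gfilt =
  fixes S :: "('s,'c) ring_scheme" and M :: "('s,'a) module" and I :: "'s set"
  assumes modM: "module S M" and Isub: "I \<subseteq> carrier S"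
begin

sublocale M: module S M by (rule modM)

abbreviation "N \<equiv> mpow_mod S M I"

lemmas gsimps = M.a_ac M.minus_eq M.r_neg M.l_neg M.r_neg1 M.r_neg2 M.minus_add M.minus_minus
  M.a_inv_closed M.r_zero M.l_zero

lemma Ncar: "x \<in> N i \<Longrightarrow> x \<in> carrier M" using mpow_carrierD[OF modM Isub] .
lemma Nzero[simp]: "\<zero>\<^bsub>M\<^esub> \<in> N i" using mpow_zero[OF modM Isub] .
lemma Nadd: "x \<in> N i \<Longrightarrow> y \<in> N i \<Longrightarrow> x \<oplus>\<^bsub>M\<^esub> y \<in> N i" using mpow_add[OF modM Isub] .
lemma Nneg: "x \<in> N i \<Longrightarrow> \<ominus>\<^bsub>M\<^esub> x \<in> N i" using mpow_neg[OF modM Isub] .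
lemma Nminus: "x \<in> N i \<Longrightarrow> y \<in> N i \<Longrightarrow> x \<ominus>\<^bsub>M\<^esub> y \<in> N i" using mpow_minus[OF modM Isub] .
lemma Nsmult: "s \<in> carrier S \<Longrightarrow> x \<in> N i \<Longrightarrow> s \<odot>\<^bsub>M\<^esub> x \<in> N i" using mpow_smult[OF modM Isub] .
lemma Nanti: "i \<le> j \<Longrightarrow> x \<in> N j \<Longrightarrow> x \<in> N i" using mpow_anti[OF modM Isub, of i j] by auto
lemma NSuc: "x \<in> N (Suc i) \<Longrightarrow> x \<in> N i" using Nanti[of i "Suc i"] by simp
lemma Nsum: "finite A \<Longrightarrow> g \<in> A \<rightarrow> N i \<Longrightarrow> finsum M g A \<in> N i" using mpow_sum[OF modM Isub] .

lemma cls_eq_iff: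
  assumes x: "x \<in> carrier M" and y: "y \<in> carrier M"
  shows "cls M (N k) x = cls M (N k) y \<longleftrightarrow> x \<ominus>\<^bsub>M\<^esub> y \<in> N k"
proof
  assume eq: "cls M (N k) x = cls M (N k) y"
  have "x \<in> cls M (N k) x" unfolding cls_def using x Nzero[of k] by (auto intro!: image_eqI[of _ _ "\<zero>\<^bsub>M\<^esub>"])
  then have "x \<in> cls M (N k) y" using eq by simp
  then obtain z where z: "z \<in> N k" "x = y \<oplus>\<^bsub>M\<^esub> z" unfolding cls_def by auto
  have "x \<ominus>\<^bsub>M\<^esub> y = z" using M.gL10[OF x y Ncar[OF z(1)] z(2)] .
  then show "x \<ominus>\<^bsub>M\<^esub> y \<in> N k" using z by simp
next
  assume d: "x \<ominus>\<^bsub>M\<^esub> y \<in> N k"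
  have d': "y \<ominus>\<^bsub>M\<^esub> x \<in> N k"
  proof -
    have "y \<ominus>\<^bsub>M\<^esub> x = \<ominus>\<^bsub>M\<^esub> (x \<ominus>\<^bsub>M\<^esub> y)" using x y by (simp add: M.gL2)
    then show ?thesis using Nneg[OF d] by simp
  qed
  have sub: "cls M (N k) u \<subseteq> cls M (N k) v" if u: "u \<in> carrier M" and v: "v \<in> carrier M"
    and uv: "u \<ominus>\<^bsub>M\<^esub> v \<in> N k" for u v
  proof
    fix w assume "w \<in> cls M (N k) u"
    then obtain z where z: "z \<in> N k" "w = u \<oplus>\<^bsub>M\<^esub> z" unfolding cls_def by auto
    have w1: "w = v \<oplus>\<^bsub>M\<^esub> ((u \<ominus>\<^bsub>M\<^esub> v) \<oplus>\<^bsub>M\<^esub> z)" using z(2) M.gL8[OF u v Ncar[OF z(1)]] by simp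
    have w2: "(u \<ominus>\<^bsub>M\<^esub> v) \<oplus>\<^bsub>M\<^esub> z \<in> N k" using Nadd[OF uv z(1)] .
    show "w \<in> cls M (N k) v" unfolding cls_def by (rule image_eqI[where x="(u \<ominus>\<^bsub>M\<^esub> v) \<oplus>\<^bsub>M\<^esub> z" and f="\<lambda>z. v \<oplus>\<^bsub>M\<^esub> z", OF w1 w2])
  qed
  show "cls M (N k) x = cls M (N k) y" using sub[OF x y d] sub[OF y x d'] by (rule equalityI)
qed

lemma cls_zero_iff: "x \<in> carrier M \<Longrightarrow> cls M (N k) x = cls M (N k) \<zero>\<^bsub>M\<^esub> \<longleftrightarrow> x \<in> N k"
  using cls_eq_iff[of x "\<zero>\<^bsub>M\<^esub>" k] by (simp add: M.gL3)

lemma seqc_carrier: "gseq S M I f \<Longrightarrow> seqc S M I f \<in> gr_carrier S M I"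
proof -
  assume g: "gseq S M I f"
  have f: "\<And>i. f i \<in> N i" using g unfolding gseq_def by auto
  obtain K where K: "\<And>i. i \<ge> K \<Longrightarrow> f i \<in> N (Suc i)"
    using g unfolding gseq_def by auto
  have "{i. seqc S M I f i \<noteq> cls M (N (Suc i)) \<zero>\<^bsub>M\<^esub>} \<subseteq> {..<K}"
  proof
    fix i assume "i \<in> {i. seqc S M I f i \<noteq> cls M (N (Suc i)) \<zero>\<^bsub>M\<^esub>}"
    then have "f i \<notin> N (Suc i)" using cls_zero_iff[OF Ncar[OF f]] unfolding seqc_def by auto
    then show "i \<in> {..<K}" using K by (meson lessThan_iff not_le)
  qed
  then have "finite {i. seqc S M I f i \<noteq> cls M (N (Suc i)) \<zero>\<^bsub>M\<^esub>}" by (rule finite_subset) simp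
  then show ?thesis unfolding gr_carrier_def using f by (auto simp: seqc_def)
qed

lemma rep: assumes "c \<in> gr_carrier S M I"
  shows "gr_rep S M I c i \<in> N i" "c i = cls M (N (Suc i)) (gr_rep S M I c i)"
proof -
  have "\<exists>x. x \<in> N i \<and> c i = cls M (N (Suc i)) x" using assms unfolding gr_carrier_def by auto
  from someI_ex[OF this] show "gr_rep S M I c i \<in> N i" "c i = cls M (N (Suc i)) (gr_rep S M I c i)"
    unfolding gr_rep_def by auto
qed

lemma seqc_rep: "c \<in> gr_carrier S M I \<Longrightarrow> seqc S M I (gr_rep S M I c) = c"
  using rep by (auto simp: seqc_def fun_eq_iff)

lemma rep_gseq: assumes c: "c \<in> gr_carrier S M I" shows "gseq S M I (gr_rep S M I c)"
proof -
  have fin: "finite {i. c i \<noteq> cls M (N (Suc i)) \<zero>\<^bsub>M\<^esub>}" using c unfolding gr_carrier_def by auto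
  then obtain K where K: "\<And>i. i \<in> {i. c i \<noteq> cls M (N (Suc i)) \<zero>\<^bsub>M\<^esub>} \<Longrightarrow> i < K"
    unfolding finite_nat_set_iff_bounded by auto
  have "\<forall>i\<ge>K. gr_rep S M I c i \<in> N (Suc i)"
  proof (intro allI impI)
    fix i assume "K \<le> i"
    then have "c i = cls M (N (Suc i)) \<zero>\<^bsub>M\<^esub>" using K by force
    then show "gr_rep S M I c i \<in> N (Suc i)"
      using rep[OF c, of i] cls_zero_iff[OF Ncar] by auto
  qed
  then show ?thesis unfolding gseq_def using rep(1)[OF c] by auto
qed

lemma seqc_eq_iff:
  assumes "\<And>i. f i \<in> N i" "\<And>i. g i \<in> N i"
  shows "seqc S M I f = seqc S M I g \<longleftrightarrow> eqv S M I f g"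
proof -
  have "seqc S M I f = seqc S M I g \<longleftrightarrow> (\<forall>i. seqc S M I f i = seqc S M I g i)" by (simp add: fun_eq_iff)
  also have "\<dots> \<longleftrightarrow> (\<forall>i. f i \<ominus>\<^bsub>M\<^esub> g i \<in> N (Suc i))"
    using cls_eq_iff[OF Ncar[OF assms(1)] Ncar[OF assms(2)]] by (simp add: seqc_def)
  finally show ?thesis using assms by (simp add: eqv_def)
qed

lemma seqc_eqI: "eqv S M I f g \<Longrightarrow> seqc S M I f = seqc S M I g"
proof -
  assume e: "eqv S M I f g"
  have "\<And>i. f i \<in> N i" "\<And>i. g i \<in> N i" using e unfolding eqv_def by auto
  then show ?thesis using seqc_eq_iff e by simp
qed

lemma rep_seqc: assumes "gseq S M I f" shows "eqv S M I (gr_rep S M I (seqc S M I f)) f"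
proof -
  have c: "seqc S M I f \<in> gr_carrier S M I" using seqc_carrier[OF assms] .
  have f: "\<And>i. f i \<in> N i" using assms unfolding gseq_def by auto
  show ?thesis using seqc_eq_iff[OF rep(1)[OF c] f] seqc_rep[OF c] by simp
qed

lemma eqv_refl: assumes f: "\<And>i. f i \<in> N i" shows "eqv S M I f f"
  unfolding eqv_def using M.gL4[OF Ncar[OF f]] f by simp

lemma eqv_sym: assumes e: "eqv S M I f g" shows "eqv S M I g f"
proof -
  have "g i \<ominus>\<^bsub>M\<^esub> f i \<in> N (Suc i)" for i
  proof -
    have a: "f i \<in> N i" "g i \<in> N i" "f i \<ominus>\<^bsub>M\<^esub> g i \<in> N (Suc i)" using e unfolding eqv_def by auto
    have "g i \<ominus>\<^bsub>M\<^esub> f i = \<ominus>\<^bsub>M\<^esub> (f i \<ominus>\<^bsub>M\<^esub> g i)" using Ncar[OF a(1)] Ncar[OF a(2)] by (simp add: M.gL2)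
    then show ?thesis using Nneg[OF a(3)] by simp
  qed
  then show ?thesis using e unfolding eqv_def by auto
qed

lemma eqv_trans: assumes e: "eqv S M I f g" and e2: "eqv S M I g h" shows "eqv S M I f h"
proof -
  have "f i \<ominus>\<^bsub>M\<^esub> h i \<in> N (Suc i)" for i
  proof -
    have a: "f i \<in> N i" "g i \<in> N i" "f i \<ominus>\<^bsub>M\<^esub> g i \<in> N (Suc i)"
     "h i \<in> N i" "g i \<ominus>\<^bsub>M\<^esub> h i \<in> N (Suc i)" using e e2 unfolding eqv_def by auto
    have "f i \<ominus>\<^bsub>M\<^esub> h i = (f i \<ominus>\<^bsub>M\<^esub> g i) \<oplus>\<^bsub>M\<^esub> (g i \<ominus>\<^bsub>M\<^esub> h i)"
      using Ncar[OF a(1)] Ncar[OF a(2)] Ncar[OF a(4)] by (simp add: M.gL5)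
    then show ?thesis using Nadd[OF a(3) a(5)] by simp
  qed
  then show ?thesis using e e2 unfolding eqv_def by auto
qed

lemma eqv_add: assumes e: "eqv S M I f g" and e2: "eqv S M I f' g'"
  shows "eqv S M I (\<lambda>i. f i \<oplus>\<^bsub>M\<^esub> f' i) (\<lambda>i. g i \<oplus>\<^bsub>M\<^esub> g' i)"
proof -
  have "f i \<oplus>\<^bsub>M\<^esub> f' i \<in> N i \<and> g i \<oplus>\<^bsub>M\<^esub> g' i \<in> N i \<and>
     f i \<oplus>\<^bsub>M\<^esub> f' i \<ominus>\<^bsub>M\<^esub> (g i \<oplus>\<^bsub>M\<^esub> g' i) \<in> N (Suc i)" for i
  proof -
    have a: "f i \<in> N i" "g i \<in> N i" "f i \<ominus>\<^bsub>M\<^esub> g i \<in> N (Suc i)"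
     "f' i \<in> N i" "g' i \<in> N i" "f' i \<ominus>\<^bsub>M\<^esub> g' i \<in> N (Suc i)" using e e2 unfolding eqv_def by auto
    have "f i \<oplus>\<^bsub>M\<^esub> f' i \<ominus>\<^bsub>M\<^esub> (g i \<oplus>\<^bsub>M\<^esub> g' i) = (f i \<ominus>\<^bsub>M\<^esub> g i) \<oplus>\<^bsub>M\<^esub> (f' i \<ominus>\<^bsub>M\<^esub> g' i)"
      using Ncar[OF a(1)] Ncar[OF a(2)] Ncar[OF a(4)] Ncar[OF a(5)] by (simp add: M.gL6)
    then show ?thesis using Nadd[OF a(3) a(6)] Nadd[OF a(1) a(4)] Nadd[OF a(2) a(5)] by simp
  qed
  then show ?thesis unfolding eqv_def by auto
qed

lemma eqv_neg: assumes e: "eqv S M I f g" shows "eqv S M I (\<lambda>i. \<ominus>\<^bsub>M\<^esub> f i) (\<lambda>i. \<ominus>\<^bsub>M\<^esub> g i)"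
proof -
  have "\<ominus>\<^bsub>M\<^esub> f i \<in> N i \<and> \<ominus>\<^bsub>M\<^esub> g i \<in> N i \<and> \<ominus>\<^bsub>M\<^esub> f i \<ominus>\<^bsub>M\<^esub> (\<ominus>\<^bsub>M\<^esub> g i) \<in> N (Suc i)" for i
  proof -
    have a: "f i \<in> N i" "g i \<in> N i" "f i \<ominus>\<^bsub>M\<^esub> g i \<in> N (Suc i)" using e unfolding eqv_def by auto
    have "\<ominus>\<^bsub>M\<^esub> f i \<ominus>\<^bsub>M\<^esub> (\<ominus>\<^bsub>M\<^esub> g i) = \<ominus>\<^bsub>M\<^esub> (f i \<ominus>\<^bsub>M\<^esub> g i)"
      using Ncar[OF a(1)] Ncar[OF a(2)] by (simp add: M.gL7)
    then show ?thesis using Nneg[OF a(3)] Nneg[OF a(1)] Nneg[OF a(2)] by simp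
  qed
  then show ?thesis unfolding eqv_def by auto
qed

lemma gseq_add: "gseq S M I f \<Longrightarrow> gseq S M I g \<Longrightarrow> gseq S M I (\<lambda>i. f i \<oplus>\<^bsub>M\<^esub> g i)"
  unfolding gseq_def
proof (elim conjE exE, intro conjI allI exI impI)
  fix K K' assume a: "\<forall>i. f i \<in> N i" "\<forall>i. g i \<in> N i" "\<forall>i\<ge>K. f i \<in> N (Suc i)" "\<forall>i\<ge>K'. g i \<in> N (Suc i)"
  show "\<And>i. f i \<oplus>\<^bsub>M\<^esub> g i \<in> N i" using a by (simp add: Nadd)
  show "\<And>i. max K K' \<le> i \<Longrightarrow> f i \<oplus>\<^bsub>M\<^esub> g i \<in> N (Suc i)" using a by (simp add: Nadd)
qed

lemma gseq_neg: "gseq S M I f \<Longrightarrow> gseq S M I (\<lambda>i. \<ominus>\<^bsub>M\<^esub> f i)"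
proof -
  assume g: "gseq S M I f"
  obtain K where K: "\<And>i. i \<ge> K \<Longrightarrow> f i \<in> N (Suc i)" using g unfolding gseq_def by auto
  show ?thesis using g K Nneg unfolding gseq_def by auto
qed

lemma gseq_delta: "x \<in> N i \<Longrightarrow> gseq S M I (delta M i x)"
  unfolding gseq_def delta_def by (intro conjI exI[of _ "Suc i"] allI impI) auto

lemma gseq_zero: "gseq S M I (\<lambda>i. \<zero>\<^bsub>M\<^esub>)"
  unfolding gseq_def by auto

lemma gseqD: "gseq S M I f \<Longrightarrow> f i \<in> N i" unfolding gseq_def by auto

lemma repN: "c \<in> gr_carrier S M I \<Longrightarrow> gr_rep S M I c i \<in> N i" using rep(1) .

lemma eqvD: "eqv S M I f g \<Longrightarrow> f i \<in> N i" "eqv S M I f g \<Longrightarrow> g i \<in> N i"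
  unfolding eqv_def by auto

end


definition conv :: "('s,'p) module \<Rightarrow> ('a \<Rightarrow> 'b \<Rightarrow> 'p) \<Rightarrow> (nat \<Rightarrow> 'a) \<Rightarrow> (nat \<Rightarrow> 'b) \<Rightarrow> nat \<Rightarrow> 'p" where
  "conv P \<beta> f g = (\<lambda>t. finsum P (\<lambda>i. \<beta> (f i) (g (t - i))) {..t})"

context bilin
begin

sublocale gA: gfilt S A I by (rule gfilt.intro[OF modA Isub])
sublocale gB: gfilt S B I by (rule gfilt.intro[OF modB Isub])
sublocale gP: gfilt S P I by (rule gfilt.intro[OF modP Isub])

lemma conv_term_N: "f i \<in> mpow_mod S A I a \<Longrightarrow> g j \<in> mpow_mod S B I b \<Longrightarrow> a + b \<ge> c
   \<Longrightarrow> \<beta> (f i) (g j) \<in> mpow_mod S P I c"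
  using filt gP.Nanti by blast

lemma conv_N: assumes f: "\<And>i. f i \<in> mpow_mod S A I i" and g: "\<And>i. g i \<in> mpow_mod S B I i"
  shows "conv P \<beta> f g t \<in> mpow_mod S P I t"
  unfolding conv_def
proof (rule gP.Nsum)
  show "(\<lambda>i. \<beta> (f i) (g (t - i))) \<in> {..t} \<rightarrow> mpow_mod S P I t"
  proof
    fix i assume i: "i \<in> {..t}"
    show "\<beta> (f i) (g (t - i)) \<in> mpow_mod S P I t" using filt[OF f[of i] g[of "t - i"]] i by simp
  qed
qed simp

lemma conv_car: "(\<And>i. f i \<in> mpow_mod S A I i) \<Longrightarrow> (\<And>i. g i \<in> mpow_mod S B I i) \<Longrightarrow>
   conv P \<beta> f g t \<in> carrier P"
  using conv_N gP.Ncar by blast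

lemma conv_gseq: assumes f: "gseq S A I f" and g: "gseq S B I g" shows "gseq S P I (conv P \<beta> f g)"
proof -
  have fN: "\<And>i. f i \<in> mpow_mod S A I i" and gN: "\<And>i. g i \<in> mpow_mod S B I i"
    using f g by (auto simp: gseq_def)
  obtain K where K: "\<And>i. i \<ge> K \<Longrightarrow> f i \<in> mpow_mod S A I (Suc i)" using f unfolding gseq_def by auto
  obtain K' where K': "\<And>i. i \<ge> K' \<Longrightarrow> g i \<in> mpow_mod S B I (Suc i)" using g unfolding gseq_def by auto
  have "conv P \<beta> f g t \<in> mpow_mod S P I (Suc t)" if t: "t \<ge> K + K'" for t
    unfolding conv_def
  proof (rule gP.Nsum)
    show "(\<lambda>i. \<beta> (f i) (g (t - i))) \<in> {..t} \<rightarrow> mpow_mod S P I (Suc t)"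
    proof
      fix i assume i: "i \<in> {..t}"
      show "\<beta> (f i) (g (t - i)) \<in> mpow_mod S P I (Suc t)"
      proof (cases "i \<ge> K")
        case True
        then show ?thesis using filt[OF K[OF True] gN[of "t - i"]] i by simp
      next
        case False
        then have "t - i \<ge> K'" using t by simp
        then show ?thesis using filt[OF fN[of i] K'[OF \<open>t - i \<ge> K'\<close>]] i by simp
      qed
    qed
  qed simp
  then show ?thesis unfolding gseq_def using conv_N[OF fN gN] by blast
qed

lemma conv_eqvL: assumes e: "eqv S A I f f'" and g: "\<And>i. g i \<in> mpow_mod S B I i"
  shows "eqv S P I (conv P \<beta> f g) (conv P \<beta> f' g)"
proof -
  have fN: "\<And>i. f i \<in> mpow_mod S A I i" and f'N: "\<And>i. f' i \<in> mpow_mod S A I i"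
    and d: "\<And>i. f i \<ominus>\<^bsub>A\<^esub> f' i \<in> mpow_mod S A I (Suc i)"
    using e unfolding eqv_def by auto
  have "conv P \<beta> f g t \<ominus>\<^bsub>P\<^esub> conv P \<beta> f' g t \<in> mpow_mod S P I (Suc t)" for t
  proof -
    have "conv P \<beta> f g t \<ominus>\<^bsub>P\<^esub> conv P \<beta> f' g t =
       finsum P (\<lambda>i. \<beta> (f i) (g (t - i)) \<ominus>\<^bsub>P\<^esub> \<beta> (f' i) (g (t - i))) {..t}"
      unfolding conv_def
      by (rule P.finsum_diff[symmetric]) (auto intro!: bclosed gA.Ncar[OF fN] gA.Ncar[OF f'N] gB.Ncar[OF g])
    also have "\<dots> = finsum P (\<lambda>i. \<beta> (f i \<ominus>\<^bsub>A\<^esub> f' i) (g (t - i))) {..t}"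
      by (intro P.finsum_cong) (auto simp: minusL gA.Ncar[OF fN] gA.Ncar[OF f'N] gB.Ncar[OF g] bclosed Pi_iff)
    also have "\<dots> \<in> mpow_mod S P I (Suc t)"
    proof (rule gP.Nsum)
      show "(\<lambda>i. \<beta> (f i \<ominus>\<^bsub>A\<^esub> f' i) (g (t - i))) \<in> {..t} \<rightarrow> mpow_mod S P I (Suc t)"
      proof
        fix i assume i: "i \<in> {..t}"
        show "\<beta> (f i \<ominus>\<^bsub>A\<^esub> f' i) (g (t - i)) \<in> mpow_mod S P I (Suc t)"
          using filt[OF d[of i] g[of "t - i"]] i by simp
      qed
    qed simp
    finally show ?thesis .
  qed
  then show ?thesis unfolding eqv_def using conv_N[OF fN g] conv_N[OF f'N g] by blast
qed

lemma conv_eqvR: assumes e: "eqv S B I g g'" and f: "\<And>i. f i \<in> mpow_mod S A I i"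
  shows "eqv S P I (conv P \<beta> f g) (conv P \<beta> f g')"
proof -
  have gN: "\<And>i. g i \<in> mpow_mod S B I i" and g'N: "\<And>i. g' i \<in> mpow_mod S B I i"
    and d: "\<And>i. g i \<ominus>\<^bsub>B\<^esub> g' i \<in> mpow_mod S B I (Suc i)"
    using e unfolding eqv_def by auto
  have "conv P \<beta> f g t \<ominus>\<^bsub>P\<^esub> conv P \<beta> f g' t \<in> mpow_mod S P I (Suc t)" for t
  proof -
    have "conv P \<beta> f g t \<ominus>\<^bsub>P\<^esub> conv P \<beta> f g' t =
       finsum P (\<lambda>i. \<beta> (f i) (g (t - i)) \<ominus>\<^bsub>P\<^esub> \<beta> (f i) (g' (t - i))) {..t}"
      unfolding conv_def
      by (rule P.finsum_diff[symmetric]) (auto intro!: bclosed gA.Ncar[OF f] gB.Ncar[OF gN] gB.Ncar[OF g'N])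
    also have "\<dots> = finsum P (\<lambda>i. \<beta> (f i) (g (t - i) \<ominus>\<^bsub>B\<^esub> g' (t - i))) {..t}"
      by (intro P.finsum_cong) (auto simp: minusR gA.Ncar[OF f] gB.Ncar[OF g'N] gB.Ncar[OF gN] bclosed Pi_iff)
    also have "\<dots> \<in> mpow_mod S P I (Suc t)"
    proof (rule gP.Nsum)
      show "(\<lambda>i. \<beta> (f i) (g (t - i) \<ominus>\<^bsub>B\<^esub> g' (t - i))) \<in> {..t} \<rightarrow> mpow_mod S P I (Suc t)"
      proof
        fix i assume i: "i \<in> {..t}"
        show "\<beta> (f i) (g (t - i) \<ominus>\<^bsub>B\<^esub> g' (t - i)) \<in> mpow_mod S P I (Suc t)"
          using filt[OF f[of i] d[of "t - i"]] i by simp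
      qed
    qed simp
    finally show ?thesis .
  qed
  then show ?thesis unfolding eqv_def using conv_N[OF f gN] conv_N[OF f g'N] by blast
qed

lemma conv_eqv: "eqv S A I f f' \<Longrightarrow> eqv S B I g g' \<Longrightarrow>
   eqv S P I (conv P \<beta> f g) (conv P \<beta> f' g')"
  by (rule gP.eqv_trans[OF conv_eqvL conv_eqvR]) (auto simp: eqv_def)

end


context abelian_monoid begin

lemma double_sum:
  fixes t :: nat
  assumes Z: "\<And>i j. Z i j \<in> carrier G"
  shows "(\<Oplus>i\<in>{..t}. \<Oplus>j\<in>{..i}. Z i j) = (\<Oplus>j\<in>{..t}. \<Oplus>l\<in>{..t - j}. Z (j + l) j)"
proof (induction t)
  case 0 then show ?case using Z by (simp add: finsum_insert Pi_iff)
next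
  case (Suc t)
  have c1: "(\<lambda>i. \<Oplus>j\<in>{..i}. Z i j) \<in> {..Suc t} \<rightarrow> carrier G" using Z by (auto intro: finsum_closed)
  have "(\<Oplus>i\<in>{..Suc t}. \<Oplus>j\<in>{..i}. Z i j) = (\<Oplus>j\<in>{..Suc t}. Z (Suc t) j) \<oplus> (\<Oplus>i\<in>{..t}. \<Oplus>j\<in>{..i}. Z i j)"
    using c1 by (simp only: finsum_Suc)
  also have "\<dots> = (\<Oplus>j\<in>{..Suc t}. Z (Suc t) j) \<oplus> (\<Oplus>j\<in>{..t}. \<Oplus>l\<in>{..t - j}. Z (j + l) j)"
    using Suc by simp
  finally have L: "(\<Oplus>i\<in>{..Suc t}. \<Oplus>j\<in>{..i}. Z i j) =
     (\<Oplus>j\<in>{..Suc t}. Z (Suc t) j) \<oplus> (\<Oplus>j\<in>{..t}. \<Oplus>l\<in>{..t - j}. Z (j + l) j)" .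
  have inner: "(\<Oplus>l\<in>{..Suc t - j}. Z (j + l) j) = Z (Suc t) j \<oplus> (\<Oplus>l\<in>{..t - j}. Z (j + l) j)"
    if j: "j \<in> {..t}" for j
  proof -
    have "Suc t - j = Suc (t - j)" using j by auto
    then have "(\<Oplus>l\<in>{..Suc t - j}. Z (j + l) j) = Z (j + Suc (t - j)) j \<oplus> (\<Oplus>l\<in>{..t - j}. Z (j + l) j)"
      using Z by (simp add: Pi_iff)
    moreover have "j + Suc (t - j) = Suc t" using j by auto
    ultimately show ?thesis by simp
  qed
  have c2: "(\<lambda>j. \<Oplus>l\<in>{..Suc t - j}. Z (j + l) j) \<in> {..Suc t} \<rightarrow> carrier G" using Z by (auto intro: finsum_closed)
  have "(\<Oplus>j\<in>{..Suc t}. \<Oplus>l\<in>{..Suc t - j}. Z (j + l) j) =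
      (\<Oplus>l\<in>{..Suc t - Suc t}. Z (Suc t + l) (Suc t)) \<oplus> (\<Oplus>j\<in>{..t}. \<Oplus>l\<in>{..Suc t - j}. Z (j + l) j)"
    using c2 by (simp only: finsum_Suc)
  also have "\<dots> = Z (Suc t) (Suc t) \<oplus> (\<Oplus>j\<in>{..t}. Z (Suc t) j \<oplus> (\<Oplus>l\<in>{..t - j}. Z (j + l) j))"
    using inner Z by (simp add: Pi_iff cong: finsum_cong)
  also have "\<dots> = Z (Suc t) (Suc t) \<oplus> ((\<Oplus>j\<in>{..t}. Z (Suc t) j) \<oplus> (\<Oplus>j\<in>{..t}. \<Oplus>l\<in>{..t - j}. Z (j + l) j))"
    using Z by (simp add: finsum_addf Pi_iff finsum_closed)
  also have "\<dots> = (Z (Suc t) (Suc t) \<oplus> (\<Oplus>j\<in>{..t}. Z (Suc t) j)) \<oplus> (\<Oplus>j\<in>{..t}. \<Oplus>l\<in>{..t - j}. Z (j + l) j)"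
    using Z by (simp add: a_assoc finsum_closed Pi_iff)
  also have "\<dots> = (\<Oplus>j\<in>{..Suc t}. Z (Suc t) j) \<oplus> (\<Oplus>j\<in>{..t}. \<Oplus>l\<in>{..t - j}. Z (j + l) j)"
    using Z by (simp add: Pi_iff)
  finally show ?case using L by simp
qed

lemma sum_rev:
  fixes t :: nat
  assumes "F \<in> {..t} \<rightarrow> carrier G"
  shows "(\<Oplus>i\<in>{..t}. F (t - i)) = (\<Oplus>i\<in>{..t}. F i)"
proof -
  have im: "(\<lambda>i. t - i) ` {..t} = {..t}"
  proof
    show "{..t} \<subseteq> (\<lambda>i. t - i) ` {..t}"
    proof
      fix x assume "x \<in> {..t}" then show "x \<in> (\<lambda>i. t - i) ` {..t}" by (intro image_eqI[of _ _ "t - x"]) auto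
    qed
  qed auto
  have inj: "inj_on (\<lambda>i. t - i) {..t}" by (auto simp: inj_on_def)
  have "(\<Oplus>i\<in>(\<lambda>i. t - i) ` {..t}. F i) = (\<Oplus>i\<in>{..t}. F (t - i))"
    by (rule finsum_reindex) (use assms im inj in auto)
  then show ?thesis using im by simp
qed

end

lemma conv_assoc:
  assumes b1: "bilin S A B P \<beta>1 I" and b3: "bilin S P C Q \<beta>3 I"
    and b2: "bilin S B C P2 \<beta>2 I" and b4: "bilin S A P2 Q \<beta>4 I"
    and id: "\<And>x y z. x \<in> carrier A \<Longrightarrow> y \<in> carrier B \<Longrightarrow> z \<in> carrier C \<Longrightarrow>
       \<beta>3 (\<beta>1 x y) z = \<beta>4 x (\<beta>2 y z)"
    and f: "\<And>i. f i \<in> carrier A" and g: "\<And>i. g i \<in> carrier B" and h: "\<And>i. h i \<in> carrier C"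
  shows "conv Q \<beta>3 (conv P \<beta>1 f g) h = conv Q \<beta>4 f (conv P2 \<beta>2 g h)"
proof
  fix t
  interpret b1: bilin S A B P \<beta>1 I by fact
  interpret b3: bilin S P C Q \<beta>3 I by fact
  interpret b2: bilin S B C P2 \<beta>2 I by fact
  interpret b4: bilin S A P2 Q \<beta>4 I by fact
  let ?X = "\<lambda>i j. \<beta>3 (\<beta>1 (f j) (g (i - j))) (h (t - i))"
  have X: "\<And>i j. ?X i j \<in> carrier Q" using f g h b1.bclosed b3.bclosed by simp
  have "conv Q \<beta>3 (conv P \<beta>1 f g) h t = (\<Oplus>\<^bsub>Q\<^esub>i\<in>{..t}. \<Oplus>\<^bsub>Q\<^esub>j\<in>{..i}. ?X i j)"
    unfolding conv_def
    by (intro b3.P.finsum_cong) (auto simp: b3.sumL Pi_iff f g h b1.bclosed b3.bclosed intro!: b3.P.finsum_closed)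
  also have "\<dots> = (\<Oplus>\<^bsub>Q\<^esub>j\<in>{..t}. \<Oplus>\<^bsub>Q\<^esub>l\<in>{..t - j}. ?X (j + l) j)"
    by (rule b3.P.double_sum[OF X])
  also have "\<dots> = conv Q \<beta>4 f (conv P2 \<beta>2 g h) t"
    unfolding conv_def
    by (intro b3.P.finsum_cong) (auto simp: b4.sumR Pi_iff f g h b2.bclosed b4.bclosed id diff_diff_add intro!: b3.P.finsum_cong b3.P.finsum_closed)
  finally show "conv Q \<beta>3 (conv P \<beta>1 f g) h t = conv Q \<beta>4 f (conv P2 \<beta>2 g h) t" .
qed

lemma conv_comm:
  assumes b: "bilin S A B Q \<beta> I" and b': "bilin S B A Q \<beta>' I"
    and sig: "addhom Q Q \<sigma>"
    and id: "\<And>x y. x \<in> carrier A \<Longrightarrow> y \<in> carrier B \<Longrightarrow> \<beta> x y = \<sigma> (\<beta>' y x)"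
    and f: "\<And>i. f i \<in> carrier A" and g: "\<And>i. g i \<in> carrier B"
  shows "conv Q \<beta> f g t = \<sigma> (conv Q \<beta>' g f t)"
proof -
  interpret b: bilin S A B Q \<beta> I by fact
  interpret b': bilin S B A Q \<beta>' I by fact
  interpret s: addhom Q Q \<sigma> by fact
  have "\<sigma> (conv Q \<beta>' g f t) = (\<Oplus>\<^bsub>Q\<^esub>i\<in>{..t}. \<sigma> (\<beta>' (g i) (f (t - i))))"
    unfolding conv_def by (rule s.hsum) (auto simp: f g b'.bclosed)
  also have "\<dots> = (\<Oplus>\<^bsub>Q\<^esub>i\<in>{..t}. \<beta> (f (t - i)) (g i))"
    by (intro b.P.finsum_cong) (auto simp: id f g Pi_iff s.closed b'.bclosed)
  also have "\<dots> = (\<Oplus>\<^bsub>Q\<^esub>i\<in>{..t}. (\<lambda>k. \<beta> (f k) (g (t - k))) (t - i))"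
    by (intro b.P.finsum_cong) (auto simp: f g b.bclosed)
  also have "\<dots> = (\<Oplus>\<^bsub>Q\<^esub>i\<in>{..t}. \<beta> (f i) (g (t - i)))"
    by (rule b.P.sum_rev) (auto simp: f g b.bclosed)
  finally show ?thesis unfolding conv_def by simp
qed

lemma conv_deltaL:
  assumes b: "bilin S A B Q \<beta> I" and x: "x \<in> carrier A" and g: "\<And>i. g i \<in> carrier B"
  shows "conv Q \<beta> (delta A k x) g t = (if k \<le> t then \<beta> x (g (t - k)) else \<zero>\<^bsub>Q\<^esub>)"
proof -
  interpret b: bilin S A B Q \<beta> I by fact
  have "conv Q \<beta> (delta A k x) g t = (\<Oplus>\<^bsub>Q\<^esub>i\<in>{..t}. if k = i then \<beta> x (g (t - i)) else \<zero>\<^bsub>Q\<^esub>)"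
    unfolding conv_def delta_def by (intro b.P.finsum_cong) (auto simp: simp_implies_def g x Pi_iff b.bclosed b.zeroL b.zeroR split: if_split)
  also have "\<dots> = (if k \<le> t then \<beta> x (g (t - k)) else \<zero>\<^bsub>Q\<^esub>)"
  proof (cases "k \<le> t")
    case True
    then show ?thesis by (subst b.P.add.finprod_singleton) (auto simp: g x b.bclosed)
  next
    case False
    then have "(\<Oplus>\<^bsub>Q\<^esub>i\<in>{..t}. if k = i then \<beta> x (g (t - i)) else \<zero>\<^bsub>Q\<^esub>) = (\<Oplus>\<^bsub>Q\<^esub>i\<in>{..t}. \<zero>\<^bsub>Q\<^esub>)"
      by (intro b.P.finsum_cong) auto
    then show ?thesis using False by simp
  qed
  finally show ?thesis .
qed

lemma conv_deltaR:
  assumes b: "bilin S A B Q \<beta> I" and y: "y \<in> carrier B" and f: "\<And>i. f i \<in> carrier A"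
  shows "conv Q \<beta> f (delta B k y) t = (if k \<le> t then \<beta> (f (t - k)) y else \<zero>\<^bsub>Q\<^esub>)"
proof -
  interpret b: bilin S A B Q \<beta> I by fact
  have "conv Q \<beta> f (delta B k y) t = (\<Oplus>\<^bsub>Q\<^esub>i\<in>{..t}. if t - k = i \<and> k \<le> t then \<beta> (f (t - k)) y else \<zero>\<^bsub>Q\<^esub>)"
    unfolding conv_def delta_def by (intro b.P.finsum_cong) (auto simp: simp_implies_def f y Pi_iff b.bclosed b.zeroL b.zeroR split: if_split)
  also have "\<dots> = (if k \<le> t then \<beta> (f (t - k)) y else \<zero>\<^bsub>Q\<^esub>)"
  proof (cases "k \<le> t")
    case True
    then show ?thesis by (simp, subst b.P.add.finprod_singleton) (auto simp: f y b.bclosed)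
  next
    case False
    then show ?thesis by simp
  qed
  finally show ?thesis .
qed


context gfilt begin

lemma gr_obtain: assumes "c \<in> gr_carrier S M I" obtains f where "gseq S M I f" "c = seqc S M I f"
  by (rule that[OF rep_gseq[OF assms] seqc_rep[OF assms, symmetric]])

lemma add_seqc: "gseq S M I f \<Longrightarrow> gseq S M I g \<Longrightarrow>
   gr_add S M I (seqc S M I f) (seqc S M I g) = seqc S M I (\<lambda>i. f i \<oplus>\<^bsub>M\<^esub> g i)"
  unfolding gr_add_seqc by (rule seqc_eqI, rule eqv_add; rule rep_seqc)

lemma seqc_eq_fun: "(\<And>i. f i = g i) \<Longrightarrow> seqc S M I f = seqc S M I g"
  by (simp add: seqc_def)

lemma gseqC: "gseq S M I f \<Longrightarrow> f i \<in> carrier M" by (rule Ncar[OF gseqD])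

lemma gr_abelian_group:
  fixes G :: "((nat \<Rightarrow> 'a set), 'm) ring_scheme"
  assumes c: "carrier G = gr_carrier S M I" and a: "ring.add G = gr_add S M I"
    and z: "ring.zero G = gr_cls S M I 0 \<zero>\<^bsub>M\<^esub>"
  shows "abelian_group G"
proof (rule abelian_groupI, unfold c a z)
  have z': "gr_cls S M I 0 \<zero>\<^bsub>M\<^esub> = seqc S M I (\<lambda>i. \<zero>\<^bsub>M\<^esub>)"
    unfolding gr_cls_seqc delta_def by (rule seqc_eq_fun) simp
  show "gr_cls S M I 0 \<zero>\<^bsub>M\<^esub> \<in> gr_carrier S M I" unfolding z' by (rule seqc_carrier[OF gseq_zero])
  fix x y assume x: "x \<in> gr_carrier S M I" and y: "y \<in> gr_carrier S M I"
  obtain f where f: "gseq S M I f" "x = seqc S M I f" using gr_obtain[OF x] .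
  obtain g where g: "gseq S M I g" "y = seqc S M I g" using gr_obtain[OF y] .
  show "gr_add S M I x y \<in> gr_carrier S M I"
    unfolding f g add_seqc[OF f(1) g(1)] by (rule seqc_carrier[OF gseq_add[OF f(1) g(1)]])
  show "gr_add S M I x y = gr_add S M I y x"
    unfolding f g add_seqc[OF f(1) g(1)] add_seqc[OF g(1) f(1)]
    by (rule seqc_eq_fun) (simp add: M.a_comm gseqC f g)
next
  have z': "gr_cls S M I 0 \<zero>\<^bsub>M\<^esub> = seqc S M I (\<lambda>i. \<zero>\<^bsub>M\<^esub>)"
    unfolding gr_cls_seqc delta_def by (rule seqc_eq_fun) simp
  fix x y z assume x: "x \<in> gr_carrier S M I" and y: "y \<in> gr_carrier S M I" and zz: "z \<in> gr_carrier S M I"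
  obtain f where f: "gseq S M I f" "x = seqc S M I f" using gr_obtain[OF x] .
  obtain g where g: "gseq S M I g" "y = seqc S M I g" using gr_obtain[OF y] .
  obtain h where h: "gseq S M I h" "z = seqc S M I h" using gr_obtain[OF zz] .
  show "gr_add S M I (gr_add S M I x y) z = gr_add S M I x (gr_add S M I y z)"
    unfolding f g h add_seqc[OF f(1) g(1)] add_seqc[OF g(1) h(1)]
      add_seqc[OF gseq_add[OF f(1) g(1)] h(1)] add_seqc[OF f(1) gseq_add[OF g(1) h(1)]]
    by (rule seqc_eq_fun) (simp add: M.a_assoc gseqC f g h)
next
  have z': "gr_cls S M I 0 \<zero>\<^bsub>M\<^esub> = seqc S M I (\<lambda>i. \<zero>\<^bsub>M\<^esub>)"
    unfolding gr_cls_seqc delta_def by (rule seqc_eq_fun) simp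
  fix x assume x: "x \<in> gr_carrier S M I"
  obtain f where f: "gseq S M I f" "x = seqc S M I f" using gr_obtain[OF x] .
  show "gr_add S M I (gr_cls S M I 0 \<zero>\<^bsub>M\<^esub>) x = x"
    unfolding z' f add_seqc[OF gseq_zero f(1)]
    by (rule seqc_eq_fun) (simp add: gseqC f)
  show "\<exists>y\<in>gr_carrier S M I. gr_add S M I y x = gr_cls S M I 0 \<zero>\<^bsub>M\<^esub>"
  proof (intro bexI)
    show "seqc S M I (\<lambda>i. \<ominus>\<^bsub>M\<^esub> f i) \<in> gr_carrier S M I" by (rule seqc_carrier[OF gseq_neg[OF f(1)]])
    show "gr_add S M I (seqc S M I (\<lambda>i. \<ominus>\<^bsub>M\<^esub> f i)) x = gr_cls S M I 0 \<zero>\<^bsub>M\<^esub>"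
      unfolding z' f add_seqc[OF gseq_neg[OF f(1)] f(1)]
      by (rule seqc_eq_fun) (simp add: gseqC f M.l_neg)
  qed
qed

end

context bilin begin

lemma conv_seqc: "gseq S A I f \<Longrightarrow> gseq S B I g \<Longrightarrow>
   seqc S P I (conv P \<beta> (gr_rep S A I (seqc S A I f)) (gr_rep S B I (seqc S B I g))) = seqc S P I (conv P \<beta> f g)"
  by (rule gP.seqc_eqI, rule conv_eqv; rule gA.rep_seqc gB.rep_seqc)

lemma conv_addL: assumes f: "\<And>i. f i \<in> carrier A" and f': "\<And>i. f' i \<in> carrier A" and g: "\<And>i. g i \<in> carrier B"
  shows "conv P \<beta> (\<lambda>i. f i \<oplus>\<^bsub>A\<^esub> f' i) g t = conv P \<beta> f g t \<oplus>\<^bsub>P\<^esub> conv P \<beta> f' g t"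
proof -
  have "conv P \<beta> (\<lambda>i. f i \<oplus>\<^bsub>A\<^esub> f' i) g t = finsum P (\<lambda>i. \<beta> (f i) (g (t - i)) \<oplus>\<^bsub>P\<^esub> \<beta> (f' i) (g (t - i))) {..t}"
    unfolding conv_def by (intro P.finsum_cong) (auto simp: addL f f' g bclosed)
  also have "\<dots> = conv P \<beta> f g t \<oplus>\<^bsub>P\<^esub> conv P \<beta> f' g t"
    unfolding conv_def by (rule P.finsum_addf) (auto simp: f f' g bclosed)
  finally show ?thesis .
qed

lemma conv_addR: assumes f: "\<And>i. f i \<in> carrier A" and g': "\<And>i. g' i \<in> carrier B" and g: "\<And>i. g i \<in> carrier B"
  shows "conv P \<beta> f (\<lambda>i. g i \<oplus>\<^bsub>B\<^esub> g' i) t = conv P \<beta> f g t \<oplus>\<^bsub>P\<^esub> conv P \<beta> f g' t"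
proof -
  have "conv P \<beta> f (\<lambda>i. g i \<oplus>\<^bsub>B\<^esub> g' i) t = finsum P (\<lambda>i. \<beta> (f i) (g (t - i)) \<oplus>\<^bsub>P\<^esub> \<beta> (f i) (g' (t - i))) {..t}"
    unfolding conv_def by (intro P.finsum_cong) (auto simp: addR f g' g bclosed)
  also have "\<dots> = conv P \<beta> f g t \<oplus>\<^bsub>P\<^esub> conv P \<beta> f g' t"
    unfolding conv_def by (rule P.finsum_addf) (auto simp: f g' g bclosed)
  finally show ?thesis .
qed

lemma conv_carrier: "(\<And>i. f i \<in> carrier A) \<Longrightarrow> (\<And>i. g i \<in> carrier B) \<Longrightarrow> conv P \<beta> f g t \<in> carrier P"
  unfolding conv_def by (auto intro!: P.finsum_closed bclosed)

end


lemma bilin_swap: "bilin S A B P \<beta> I \<Longrightarrow> bilin S B A P (\<lambda>y x. \<beta> x y) I"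
  unfolding bilin_def by auto

lemma addhom_id': "abelian_group G \<Longrightarrow> addhom G G (\<lambda>x. x)"
  unfolding addhom_def addhom_axioms_def by simp

lemma conv_assoc2:
  assumes b1: "bilin S B C P \<beta>1 I" and b3: "bilin S A P Q \<beta>3 I"
    and b2: "bilin S A C P2 \<beta>2 I" and b4: "bilin S B P2 Q \<beta>4 I"
    and id: "\<And>x y z. x \<in> carrier A \<Longrightarrow> y \<in> carrier B \<Longrightarrow> z \<in> carrier C \<Longrightarrow>
       \<beta>3 x (\<beta>1 y z) = \<beta>4 y (\<beta>2 x z)"
    and f: "\<And>i. f i \<in> carrier A" and g: "\<And>i. g i \<in> carrier B" and h: "\<And>i. h i \<in> carrier C"
  shows "conv Q \<beta>3 f (conv P \<beta>1 g h) t = conv Q \<beta>4 g (conv P2 \<beta>2 f h) t"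
proof -
  interpret b1: bilin S B C P \<beta>1 I by fact
  interpret b3: bilin S A P Q \<beta>3 I by fact
  interpret b2: bilin S A C P2 \<beta>2 I by fact
  interpret b4: bilin S B P2 Q \<beta>4 I by fact
  have ch: "\<And>i. conv P \<beta>1 g h i \<in> carrier P" by (rule b1.conv_carrier) (auto simp: g h)
  have "conv Q \<beta>3 f (conv P \<beta>1 g h) t = conv Q (\<lambda>u x. \<beta>3 x u) (conv P \<beta>1 g h) f t"
    by (rule conv_comm[OF b3 bilin_swap[OF b3] addhom_id'[OF module.axioms(2)[OF b3.modP]]])
       (auto simp: f ch)
  also have "conv Q (\<lambda>u x. \<beta>3 x u) (conv P \<beta>1 g h) f = conv Q \<beta>4 g (conv P2 (\<lambda>z x. \<beta>2 x z) h f)"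
    by (rule conv_assoc[OF b1 bilin_swap[OF b3] bilin_swap[OF b2] b4]) (auto simp: f g h id)
  also have "conv P2 (\<lambda>z x. \<beta>2 x z) h f = conv P2 \<beta>2 f h"
  proof
    fix i show "conv P2 (\<lambda>z x. \<beta>2 x z) h f i = conv P2 \<beta>2 f h i"
      by (rule conv_comm[OF bilin_swap[OF b2] b2 addhom_id'[OF module.axioms(2)[OF b2.modP]]])
         (auto simp: f h)
  qed
  finally show ?thesis .
qed

context abelian_group begin

lemma sym_sum_zero:
  fixes Z :: "nat \<Rightarrow> 'a"
  assumes Z: "\<And>i. Z i \<in> carrier G"
    and anti: "\<And>i. i \<in> {a..b} \<Longrightarrow> Z (a + b - i) = \<ominus> Z i"
    and mid: "\<And>i. i \<in> {a..b} \<Longrightarrow> 2 * i = a + b \<Longrightarrow> Z i = \<zero>"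
  shows "finsum G Z {a..b} = \<zero>"
  using anti mid
proof (induction "b - a" arbitrary: a b rule: less_induct)
  case less
  show ?case
  proof (cases "a < b")
    case False
    show ?thesis
    proof (cases "a = b")
      case True
      then have "{a..b} = {a}" by simp
      then show ?thesis using less.prems(2)[of a] True Z by simp
    next
      case False then have "{a..b} = {}" using \<open>\<not> a < b\<close> by simp
      then show ?thesis by simp
    qed
  next
    case True
    have split: "{a..b} = insert a (insert b {Suc a..b - 1})" using True by auto
    have ab: "Z b = \<ominus> Z a" using less.prems(1)[of a] True by simp
    have inner: "finsum G Z {Suc a..b - 1} = \<zero>"
    proof (rule less.hyps)
      show "b - 1 - Suc a < b - a" using True by simp
      fix i assume i: "i \<in> {Suc a..b - 1}"
      then have i': "i \<in> {a..b}" by auto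
      have e: "Suc a + (b - 1) = a + b" using True by simp
      show "Z (Suc a + (b - 1) - i) = \<ominus> Z i" unfolding e by (rule less.prems(1)[OF i'])
    next
      fix i assume i: "i \<in> {Suc a..b - 1}" and t: "2 * i = Suc a + (b - 1)"
      then have i': "i \<in> {a..b}" by auto
      have e: "Suc a + (b - 1) = a + b" using True by simp
      show "Z i = \<zero>" using t unfolding e by (rule less.prems(2)[OF i'])
    qed
    have "finsum G Z {a..b} = Z a \<oplus> (Z b \<oplus> finsum G Z {Suc a..b - 1})"
      unfolding split using True Z by (simp add: finsum_insert)
    also have "\<dots> = \<zero>" using ab inner Z by (simp add: r_neg)
    finally show ?thesis .
  qed
qed

end


definition Sh :: "('s,'b) module \<Rightarrow> ('a \<Rightarrow> 'b) \<Rightarrow> (nat \<Rightarrow> 'a) \<Rightarrow> nat \<Rightarrow> 'b" where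
  "Sh M D f = (\<lambda>k. if k = 0 then \<zero>\<^bsub>M\<^esub> else D (f (k - 1)))"

lemma leib_seq:
  assumes b: "bilin S A B P \<beta> I" and bA: "bilin S A' B Q \<beta>A I" and bB: "bilin S A B' Q \<beta>B I"
    and h0: "addhom P Q D0" and hA: "addhom A A' DA" and hB: "addhom B B' DB" and hs: "addhom Q Q \<sigma>"
    and pt: "\<And>x y. x \<in> carrier A \<Longrightarrow> y \<in> carrier B \<Longrightarrow>
        D0 (\<beta> x y) = \<beta>A (DA x) y \<oplus>\<^bsub>Q\<^esub> \<sigma> (\<beta>B x (DB y))"
    and f: "\<And>i. f i \<in> carrier A" and g: "\<And>i. g i \<in> carrier B"
  shows "Sh Q D0 (conv P \<beta> f g) t =
     conv Q \<beta>A (Sh A' DA f) g t \<oplus>\<^bsub>Q\<^esub> \<sigma> (conv Q \<beta>B f (Sh B' DB g) t)"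
proof -
  interpret b: bilin S A B P \<beta> I by fact
  interpret bA: bilin S A' B Q \<beta>A I by fact
  interpret bB: bilin S A B' Q \<beta>B I by fact
  interpret h0: addhom P Q D0 by fact
  interpret hA: addhom A A' DA by fact
  interpret hB: addhom B B' DB by fact
  interpret hs: addhom Q Q \<sigma> by fact
  have Shf: "\<And>i. Sh A' DA f i \<in> carrier A'" unfolding Sh_def using f hA.closed by simp
  have Shg: "\<And>i. Sh B' DB g i \<in> carrier B'" unfolding Sh_def using g hB.closed by simp
  show ?thesis
  proof (cases t)
    case 0
    have "conv Q \<beta>A (Sh A' DA f) g 0 = \<zero>\<^bsub>Q\<^esub>" unfolding conv_def Sh_def using g by simp
    moreover have "conv Q \<beta>B f (Sh B' DB g) 0 = \<zero>\<^bsub>Q\<^esub>" unfolding conv_def Sh_def using f by simp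
    ultimately show ?thesis using 0 hs.hzero by (simp add: Sh_def)
  next
    case (Suc j)
    let ?a = "\<lambda>i. \<beta>A (DA (f i)) (g (j - i))"
    let ?b = "\<lambda>i. \<beta>B (f i) (DB (g (j - i)))"
    have ca: "\<And>i. ?a i \<in> carrier Q" using f g hA.closed bA.bclosed by simp
    have cb: "\<And>i. ?b i \<in> carrier Q" using f g hB.closed bB.bclosed by simp
    have "Sh Q D0 (conv P \<beta> f g) t = D0 (finsum P (\<lambda>i. \<beta> (f i) (g (j - i))) {..j})"
      unfolding Sh_def conv_def using Suc by simp
    also have "\<dots> = finsum Q (\<lambda>i. D0 (\<beta> (f i) (g (j - i)))) {..j}"
      by (rule h0.hsum) (auto simp: f g b.bclosed)
    also have "\<dots> = finsum Q (\<lambda>i. ?a i \<oplus>\<^bsub>Q\<^esub> \<sigma> (?b i)) {..j}"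
      by (intro bA.P.finsum_cong) (auto simp: pt f g ca cb hs.closed)
    also have "\<dots> = finsum Q ?a {..j} \<oplus>\<^bsub>Q\<^esub> finsum Q (\<lambda>i. \<sigma> (?b i)) {..j}"
      by (rule bA.P.finsum_addf) (auto simp: ca cb hs.closed)
    also have "finsum Q (\<lambda>i. \<sigma> (?b i)) {..j} = \<sigma> (finsum Q ?b {..j})"
      by (rule hs.hsum[symmetric]) (auto simp: cb)
    also have "finsum Q ?a {..j} = conv Q \<beta>A (Sh A' DA f) g t"
    proof -
      have "conv Q \<beta>A (Sh A' DA f) g t =
          finsum Q (\<lambda>i. \<beta>A (Sh A' DA f (Suc i)) (g (Suc j - Suc i))) {..j} \<oplus>\<^bsub>Q\<^esub> \<beta>A (Sh A' DA f 0) (g (Suc j - 0))"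
        unfolding conv_def Suc by (rule bA.P.finsum_Suc2) (auto simp: Shf g bA.bclosed)
      also have "\<dots> = finsum Q ?a {..j}"
        using ca g by (simp add: Sh_def bA.P.finsum_closed Pi_iff)
      finally show ?thesis by simp
    qed
    also have "finsum Q ?b {..j} = conv Q \<beta>B f (Sh B' DB g) t"
    proof -
      have "conv Q \<beta>B f (Sh B' DB g) t =
          \<beta>B (f (Suc j)) (Sh B' DB g (Suc j - Suc j)) \<oplus>\<^bsub>Q\<^esub> finsum Q (\<lambda>i. \<beta>B (f i) (Sh B' DB g (Suc j - i))) {..j}"
        unfolding conv_def Suc by (rule bA.P.finsum_Suc) (auto simp: Shg f bB.bclosed)
      also have "\<dots> = finsum Q (\<lambda>i. \<beta>B (f i) (Sh B' DB g (Suc j - i))) {..j}"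
      proof -
        have z: "\<beta>B (f (Suc j)) (Sh B' DB g (Suc j - Suc j)) = \<zero>\<^bsub>Q\<^esub>" using f by (simp add: Sh_def)
        have c: "finsum Q (\<lambda>i. \<beta>B (f i) (Sh B' DB g (Suc j - i))) {..j} \<in> carrier Q"
          by (rule bA.P.finsum_closed) (auto simp: f Shg bB.bclosed)
        show ?thesis using z c by simp
      qed
      also have "\<dots> = finsum Q ?b {..j}"
        by (intro bA.P.finsum_cong) (auto simp: Sh_def Suc_diff_le f g hB.closed bB.bclosed)
      finally show ?thesis by simp
    qed
    finally show ?thesis .
  qed
qed


definition mu_lin :: "('r,'c) ring_scheme \<Rightarrow> 'r set \<Rightarrow> (nat \<Rightarrow> ('r,'f) module)
    \<Rightarrow> (nat \<Rightarrow> nat \<Rightarrow> 'f \<Rightarrow> 'f \<Rightarrow> 'f) \<Rightarrow> nat \<Rightarrow> nat \<Rightarrow> (nat \<Rightarrow> 'f set) \<Rightarrow> (nat \<Rightarrow> 'f set) \<Rightarrow> (nat \<Rightarrow> 'f set)" where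
  "mu_lin R m F mu n k a b = seqc R (F (n + k)) m
     (conv (F (n + k)) (mu n k) (gr_rep R (F n) m a) (gr_rep R (F k) m b))"

locale main =
  fixes R :: "('r,'c) ring_scheme" and m :: "'r set" and F :: "nat \<Rightarrow> ('r,'f) module"
    and d :: "nat \<Rightarrow> 'f \<Rightarrow> 'f" and mu :: "nat \<Rightarrow> nat \<Rightarrow> 'f \<Rightarrow> 'f \<Rightarrow> 'f" and e :: 'f
  assumes mI: "m \<subseteq> carrier R"
    and dg: "dg_algebra R F d mu e"
    and minl: "\<And>n. d (Suc n) ` carrier (F (Suc n)) \<subseteq> mpow_mod R (F n) m 1"
begin

abbreviation "RM \<equiv> ring_module R"

lemmas C1 = dg[unfolded dg_algebra_def, THEN conjunct1]
lemmas C2 = dg[unfolded dg_algebra_def, THEN conjunct2, THEN conjunct1]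
lemmas C3 = dg[unfolded dg_algebra_def, THEN conjunct2, THEN conjunct2, THEN conjunct1]
lemmas C4 = dg[unfolded dg_algebra_def, THEN conjunct2, THEN conjunct2, THEN conjunct2, THEN conjunct1]
lemmas C5 = dg[unfolded dg_algebra_def, THEN conjunct2, THEN conjunct2, THEN conjunct2, THEN conjunct2, THEN conjunct1]
lemmas C6 = dg[unfolded dg_algebra_def, THEN conjunct2, THEN conjunct2, THEN conjunct2, THEN conjunct2, THEN conjunct2, THEN conjunct1]
lemmas C7 = dg[unfolded dg_algebra_def, THEN conjunct2, THEN conjunct2, THEN conjunct2, THEN conjunct2, THEN conjunct2, THEN conjunct2, THEN conjunct1]
lemmas C8 = dg[unfolded dg_algebra_def, THEN conjunct2, THEN conjunct2, THEN conjunct2, THEN conjunct2, THEN conjunct2, THEN conjunct2, THEN conjunct2, THEN conjunct1]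
lemmas C9 = dg[unfolded dg_algebra_def, THEN conjunct2, THEN conjunct2, THEN conjunct2, THEN conjunct2, THEN conjunct2, THEN conjunct2, THEN conjunct2, THEN conjunct2, THEN conjunct1]
lemmas C10 = dg[unfolded dg_algebra_def, THEN conjunct2, THEN conjunct2, THEN conjunct2, THEN conjunct2, THEN conjunct2, THEN conjunct2, THEN conjunct2, THEN conjunct2, THEN conjunct2, THEN conjunct1]
lemmas C11 = dg[unfolded dg_algebra_def, THEN conjunct2, THEN conjunct2, THEN conjunct2, THEN conjunct2, THEN conjunct2, THEN conjunct2, THEN conjunct2, THEN conjunct2, THEN conjunct2, THEN conjunct2, THEN conjunct1]
lemmas C12 = dg[unfolded dg_algebra_def, THEN conjunct2, THEN conjunct2, THEN conjunct2, THEN conjunct2, THEN conjunct2, THEN conjunct2, THEN conjunct2, THEN conjunct2, THEN conjunct2, THEN conjunct2, THEN conjunct2, THEN conjunct1]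
lemmas C13 = dg[unfolded dg_algebra_def, THEN conjunct2, THEN conjunct2, THEN conjunct2, THEN conjunct2, THEN conjunct2, THEN conjunct2, THEN conjunct2, THEN conjunct2, THEN conjunct2, THEN conjunct2, THEN conjunct2, THEN conjunct2, THEN conjunct1]
lemmas C14 = dg[unfolded dg_algebra_def, THEN conjunct2, THEN conjunct2, THEN conjunct2, THEN conjunct2, THEN conjunct2, THEN conjunct2, THEN conjunct2, THEN conjunct2, THEN conjunct2, THEN conjunct2, THEN conjunct2, THEN conjunct2, THEN conjunct2]

lemma cR: "cring R" by (rule C1)
lemma modF: "module R (F n)" by (rule C2[rule_format])
lemma linD: "linear_map R (F (Suc n)) (F n) (d (Suc n))" by (rule C3[rule_format])
lemma dd: "x \<in> carrier (F (Suc (Suc n))) \<Longrightarrow> d (Suc n) (d (Suc (Suc n)) x) = \<zero>\<^bsub>F n\<^esub>"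
  by (rule C4[rule_format])
lemma mu_closed: "x \<in> carrier (F n) \<Longrightarrow> y \<in> carrier (F k) \<Longrightarrow> mu n k x y \<in> carrier (F (n + k))"
  by (rule C5[rule_format])
lemma mu_addL: "x \<in> carrier (F n) \<Longrightarrow> x' \<in> carrier (F n) \<Longrightarrow> y \<in> carrier (F k) \<Longrightarrow>
   mu n k (x \<oplus>\<^bsub>F n\<^esub> x') y = mu n k x y \<oplus>\<^bsub>F (n + k)\<^esub> mu n k x' y"
  by (rule C6[rule_format])
lemma mu_addR: "x \<in> carrier (F n) \<Longrightarrow> y \<in> carrier (F k) \<Longrightarrow> y' \<in> carrier (F k) \<Longrightarrow>
   mu n k x (y \<oplus>\<^bsub>F k\<^esub> y') = mu n k x y \<oplus>\<^bsub>F (n + k)\<^esub> mu n k x y'"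
  by (rule C7[rule_format])
lemma mu_smL: "s \<in> carrier R \<Longrightarrow> x \<in> carrier (F n) \<Longrightarrow> y \<in> carrier (F k) \<Longrightarrow>
   mu n k (s \<odot>\<^bsub>F n\<^esub> x) y = s \<odot>\<^bsub>F (n + k)\<^esub> mu n k x y"
  by (rule C8[rule_format, THEN conjunct1])
lemma mu_smR: "s \<in> carrier R \<Longrightarrow> x \<in> carrier (F n) \<Longrightarrow> y \<in> carrier (F k) \<Longrightarrow>
   mu n k x (s \<odot>\<^bsub>F k\<^esub> y) = s \<odot>\<^bsub>F (n + k)\<^esub> mu n k x y"
  by (rule C8[rule_format, THEN conjunct2])
lemma e_car: "e \<in> carrier (F 0)" by (rule C9[rule_format])
lemma unitL: "x \<in> carrier (F n) \<Longrightarrow> mu 0 n e x = x" by (rule C10[rule_format, THEN conjunct1])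
lemma unitR: "x \<in> carrier (F n) \<Longrightarrow> mu n 0 x e = x" by (rule C10[rule_format, THEN conjunct2])
lemma mu_assoc: "x \<in> carrier (F n) \<Longrightarrow> y \<in> carrier (F k) \<Longrightarrow> z \<in> carrier (F l) \<Longrightarrow>
   mu (n + k) l (mu n k x y) z = mu n (k + l) x (mu k l y z)"
  by (rule C11[rule_format])
lemma mu_comm: "x \<in> carrier (F n) \<Longrightarrow> y \<in> carrier (F k) \<Longrightarrow>
   mu n k x y = sgn_mod (F (n + k)) (n * k) (mu k n y x)"
  by (rule C12[rule_format])
lemma mu_odd: "odd n \<Longrightarrow> x \<in> carrier (F n) \<Longrightarrow> mu n n x x = \<zero>\<^bsub>F (n + n)\<^esub>"
  by (rule C13[rule_format])
lemma leibniz: "0 < n + k \<Longrightarrow> x \<in> carrier (F n) \<Longrightarrow> y \<in> carrier (F k) \<Longrightarrow>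
   d (n + k) (mu n k x y) =
     (if n = 0 then \<zero>\<^bsub>F (n + k - 1)\<^esub> else mu (n - 1) k (d n x) y)
     \<oplus>\<^bsub>F (n + k - 1)\<^esub>
     (if k = 0 then \<zero>\<^bsub>F (n + k - 1)\<^esub> else sgn_mod (F (n + k - 1)) n (mu n (k - 1) x (d k y)))"
  by (rule C14[rule_format])

end


context main begin

lemma modRM: "module R RM" by (rule module_ring_module[OF cR])

lemma Isub: "m \<subseteq> carrier R" by (rule mI)

sublocale R: cring R by (rule cR)

lemma bR: "bilin R RM RM RM (\<lambda>x y. x \<otimes>\<^bsub>R\<^esub> y) m"
  by (rule bilin.intro[OF modRM modRM modRM mI]) (simp_all add: R.l_distr R.r_distr R.m_assoc R.m_lcomm)

lemma bS: "bilin R RM (F n) (F n) (\<lambda>s x. s \<odot>\<^bsub>F n\<^esub> x) m"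
proof -
  interpret Fn: module R "F n" by (rule modF)
  show ?thesis
  proof (rule bilin.intro[OF modRM modF modF mI])
    fix s x y assume s: "s \<in> carrier R" and x: "x \<in> carrier RM" and y: "y \<in> carrier (F n)"
    then show "x \<odot>\<^bsub>F n\<^esub> (s \<odot>\<^bsub>F n\<^esub> y) = s \<odot>\<^bsub>F n\<^esub> (x \<odot>\<^bsub>F n\<^esub> y)"
      by (simp add: Fn.smult_assoc1[symmetric] R.m_comm)
  qed (simp_all add: Fn.smult_l_distr Fn.smult_r_distr Fn.smult_assoc1)
qed

lemma bMu: "bilin R (F n) (F k) (F (n + k)) (mu n k) m"
  by (rule bilin.intro[OF modF modF modF mI]) (simp_all add: mu_closed mu_addL mu_addR mu_smL mu_smR)


sublocale bR: bilin R RM RM RM "\<lambda>x y. x \<otimes>\<^bsub>R\<^esub> y" m by (rule bR)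

abbreviation "Rg \<equiv> assoc_graded R m"
abbreviation "repR \<equiv> gr_rep R RM m"

lemma gF: "gfilt R (F n) m" by (rule gfilt.intro[OF modF mI])

lemma Rg_carrier: "carrier Rg = gr_carrier R RM m" by (simp add: assoc_graded_def Let_def)
lemma Rg_add: "ring.add Rg = gr_add R RM m" by (simp add: assoc_graded_def Let_def)
lemma Rg_zero: "ring.zero Rg = gr_cls R RM m 0 \<zero>\<^bsub>RM\<^esub>" by (simp add: assoc_graded_def Let_def)
lemma Rg_one: "monoid.one Rg = seqc R RM m (delta RM 0 \<one>\<^bsub>R\<^esub>)"
  by (simp add: assoc_graded_def Let_def gr_cls_seqc)

lemma Rg_mult: assumes a: "a \<in> carrier Rg" and b: "b \<in> carrier Rg"
  shows "a \<otimes>\<^bsub>Rg\<^esub> b = seqc R RM m (conv RM (\<lambda>x y. x \<otimes>\<^bsub>R\<^esub> y) (repR a) (repR b))"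
proof -
  have ra: "\<And>i. repR a i \<in> carrier R" using bR.gA.Ncar[OF bR.gA.repN] a Rg_carrier by simp
  have rb: "\<And>i. repR b i \<in> carrier R" using bR.gA.Ncar[OF bR.gA.repN] b Rg_carrier by simp
  show ?thesis
    unfolding seqc_def conv_def
    by (simp add: assoc_graded_def Let_def ra rb Pi_iff finsum_ring_module[OF cR])
qed

lemma mult_seqc: assumes f: "gseq R RM m f" and g: "gseq R RM m g"
  shows "seqc R RM m f \<otimes>\<^bsub>Rg\<^esub> seqc R RM m g = seqc R RM m (conv RM (\<lambda>x y. x \<otimes>\<^bsub>R\<^esub> y) f g)"
proof -
  have c: "seqc R RM m f \<in> carrier Rg" "seqc R RM m g \<in> carrier Rg"
    using bR.gA.seqc_carrier f g Rg_carrier by auto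
  show ?thesis unfolding Rg_mult[OF c] by (rule bR.conv_seqc[OF f g])
qed

lemma Rg_abelian: "abelian_group Rg"
  by (rule bR.gA.gr_abelian_group[OF Rg_carrier Rg_add Rg_zero])


lemma Rg_obtain: assumes "x \<in> carrier Rg" obtains f where "gseq R RM m f" "x = seqc R RM m f"
  using bR.gA.gr_obtain assms Rg_carrier by auto

lemma addhom_id: "abelian_group G \<Longrightarrow> addhom G G (\<lambda>x. x)"
  unfolding addhom_def addhom_axioms_def by simp

lemma Rg_cring: "cring Rg"
proof (rule cringI[OF Rg_abelian])
  note gc = bR.gA.gseqC[simplified]
  show "comm_monoid Rg"
  proof (rule comm_monoidI)
    fix x y assume x: "x \<in> carrier Rg" and y: "y \<in> carrier Rg"
    obtain f where f: "gseq R RM m f" "x = seqc R RM m f" using Rg_obtain[OF x] .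
    obtain g where g: "gseq R RM m g" "y = seqc R RM m g" using Rg_obtain[OF y] .
    show "x \<otimes>\<^bsub>Rg\<^esub> y \<in> carrier Rg"
      unfolding f g mult_seqc[OF f(1) g(1)] Rg_carrier by (rule bR.gA.seqc_carrier[OF bR.conv_gseq[OF f(1) g(1)]])
    show "x \<otimes>\<^bsub>Rg\<^esub> y = y \<otimes>\<^bsub>Rg\<^esub> x"
      unfolding f g mult_seqc[OF f(1) g(1)] mult_seqc[OF g(1) f(1)]
    proof (rule bR.gA.seqc_eq_fun)
      fix t show "conv RM (\<lambda>x y. x \<otimes>\<^bsub>R\<^esub> y) f g t = conv RM (\<lambda>x y. x \<otimes>\<^bsub>R\<^esub> y) g f t"
        by (rule conv_comm[OF bR bR addhom_id[OF module.axioms(2)[OF modRM]]])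
           (auto simp: gc[OF f(1)] gc[OF g(1)] R.m_comm)
    qed
  next
    fix x y z assume x: "x \<in> carrier Rg" and y: "y \<in> carrier Rg" and z: "z \<in> carrier Rg"
    obtain f where f: "gseq R RM m f" "x = seqc R RM m f" using Rg_obtain[OF x] .
    obtain g where g: "gseq R RM m g" "y = seqc R RM m g" using Rg_obtain[OF y] .
    obtain h where h: "gseq R RM m h" "z = seqc R RM m h" using Rg_obtain[OF z] .
    show "x \<otimes>\<^bsub>Rg\<^esub> y \<otimes>\<^bsub>Rg\<^esub> z = x \<otimes>\<^bsub>Rg\<^esub> (y \<otimes>\<^bsub>Rg\<^esub> z)"
      unfolding f g h mult_seqc[OF f(1) g(1)] mult_seqc[OF g(1) h(1)]
        mult_seqc[OF bR.conv_gseq[OF f(1) g(1)] h(1)] mult_seqc[OF f(1) bR.conv_gseq[OF g(1) h(1)]]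
      by (rule arg_cong[where f="seqc R RM m"], rule conv_assoc[OF bR bR bR bR])
         (auto simp: gc[OF f(1)] gc[OF g(1)] gc[OF h(1)] R.m_assoc)
  next
    have one: "monoid.one Rg = seqc R RM m (delta RM 0 \<one>\<^bsub>R\<^esub>)" by (rule Rg_one)
    have g1: "gseq R RM m (delta RM 0 \<one>\<^bsub>R\<^esub>)" by (rule bR.gA.gseq_delta) simp
    show "\<one>\<^bsub>Rg\<^esub> \<in> carrier Rg" unfolding one Rg_carrier by (rule bR.gA.seqc_carrier[OF g1])
    fix x assume x: "x \<in> carrier Rg"
    obtain f where f: "gseq R RM m f" "x = seqc R RM m f" using Rg_obtain[OF x] .
    show "\<one>\<^bsub>Rg\<^esub> \<otimes>\<^bsub>Rg\<^esub> x = x"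
      unfolding one f mult_seqc[OF g1 f(1)]
    proof (rule bR.gA.seqc_eq_fun)
      fix t show "conv RM (\<lambda>x y. x \<otimes>\<^bsub>R\<^esub> y) (delta RM 0 \<one>\<^bsub>R\<^esub>) f t = f t"
        using conv_deltaL[OF bR, of "\<one>\<^bsub>R\<^esub>" f 0 t] gc[OF f(1)] by simp
    qed
  qed
next
  note gc = bR.gA.gseqC[simplified]
  fix x y z assume x: "x \<in> carrier Rg" and y: "y \<in> carrier Rg" and z: "z \<in> carrier Rg"
  obtain f where f: "gseq R RM m f" "x = seqc R RM m f" using Rg_obtain[OF x] .
  obtain g where g: "gseq R RM m g" "y = seqc R RM m g" using Rg_obtain[OF y] .
  obtain h where h: "gseq R RM m h" "z = seqc R RM m h" using Rg_obtain[OF z] .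
  show "(x \<oplus>\<^bsub>Rg\<^esub> y) \<otimes>\<^bsub>Rg\<^esub> z = x \<otimes>\<^bsub>Rg\<^esub> z \<oplus>\<^bsub>Rg\<^esub> y \<otimes>\<^bsub>Rg\<^esub> z"
    unfolding f g h Rg_add bR.gA.add_seqc[OF f(1) g(1)] mult_seqc[OF bR.gA.gseq_add[OF f(1) g(1)] h(1)]
      mult_seqc[OF f(1) h(1)] mult_seqc[OF g(1) h(1)]
      bR.gA.add_seqc[OF bR.conv_gseq[OF f(1) h(1)] bR.conv_gseq[OF g(1) h(1)]]
  proof (rule bR.gA.seqc_eq_fun)
    fix t show "conv RM (\<lambda>x y. x \<otimes>\<^bsub>R\<^esub> y) (\<lambda>i. f i \<oplus>\<^bsub>RM\<^esub> g i) h t =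
       conv RM (\<lambda>x y. x \<otimes>\<^bsub>R\<^esub> y) f h t \<oplus>\<^bsub>RM\<^esub> conv RM (\<lambda>x y. x \<otimes>\<^bsub>R\<^esub> y) g h t"
      by (rule bR.conv_addL) (auto simp: gc[OF f(1)] gc[OF g(1)] gc[OF h(1)])
  qed
qed


abbreviation "L n \<equiv> lin_mod R m F n"
abbreviation "rp n \<equiv> gr_rep R (F n) m"

lemma L_carrier: "carrier (L n) = gr_carrier R (F n) m" by (simp add: lin_mod_def)
lemma L_add: "ring.add (L n) = gr_add R (F n) m" by (simp add: lin_mod_def)
lemma L_zero: "ring.zero (L n) = gr_cls R (F n) m 0 \<zero>\<^bsub>F n\<^esub>" by (simp add: lin_mod_def)
lemma L_smult: "a \<odot>\<^bsub>L n\<^esub> c = seqc R (F n) m (conv (F n) (\<lambda>s x. s \<odot>\<^bsub>F n\<^esub> x) (repR a) (rp n c))"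
  by (simp add: lin_mod_def seqc_def conv_def)

lemma smult_seqc: assumes f: "gseq R RM m f" and g: "gseq R (F n) m g"
  shows "seqc R RM m f \<odot>\<^bsub>L n\<^esub> seqc R (F n) m g = seqc R (F n) m (conv (F n) (\<lambda>s x. s \<odot>\<^bsub>F n\<^esub> x) f g)"
  unfolding L_smult by (rule bilin.conv_seqc[OF bS f g])

lemma L_obtain: assumes "x \<in> carrier (L n)" obtains f where "gseq R (F n) m f" "x = seqc R (F n) m f"
  using gfilt.gr_obtain[OF gF] assms L_carrier by metis

lemma L_abelian: "abelian_group (L n)"
  by (rule gfilt.gr_abelian_group[OF gF L_carrier L_add L_zero])

lemma L_module: "module Rg (L n)"
proof (rule moduleI[OF Rg_cring L_abelian])
  note gc = bR.gA.gseqC[simplified]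
  note gcF = gfilt.gseqC[OF gF]
  interpret Fn: module R "F n" by (rule modF)
  fix a b x y
  assume a: "a \<in> carrier Rg" and b: "b \<in> carrier Rg" and x: "x \<in> carrier (L n)" and y: "y \<in> carrier (L n)"
  obtain f where f: "gseq R RM m f" "a = seqc R RM m f" using Rg_obtain[OF a] .
  obtain f' where f': "gseq R RM m f'" "b = seqc R RM m f'" using Rg_obtain[OF b] .
  obtain g where g: "gseq R (F n) m g" "x = seqc R (F n) m g" using L_obtain[OF x] .
  obtain g' where g': "gseq R (F n) m g'" "y = seqc R (F n) m g'" using L_obtain[OF y] .
  show "a \<odot>\<^bsub>L n\<^esub> x \<in> carrier (L n)"
    unfolding f g smult_seqc[OF f(1) g(1)] L_carrier by (rule gfilt.seqc_carrier[OF gF bilin.conv_gseq[OF bS f(1) g(1)]])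
  show "(a \<oplus>\<^bsub>Rg\<^esub> b) \<odot>\<^bsub>L n\<^esub> x = a \<odot>\<^bsub>L n\<^esub> x \<oplus>\<^bsub>L n\<^esub> b \<odot>\<^bsub>L n\<^esub> x"
    unfolding f f' g Rg_add L_add bR.gA.add_seqc[OF f(1) f'(1)] smult_seqc[OF bR.gA.gseq_add[OF f(1) f'(1)] g(1)]
      smult_seqc[OF f(1) g(1)] smult_seqc[OF f'(1) g(1)]
      gfilt.add_seqc[OF gF bilin.conv_gseq[OF bS f(1) g(1)] bilin.conv_gseq[OF bS f'(1) g(1)]]
    by (rule gfilt.seqc_eq_fun[OF gF], rule bilin.conv_addL[OF bS])
       (auto simp: gc[OF f(1)] gc[OF f'(1)] gcF[OF g(1)])
  show "a \<odot>\<^bsub>L n\<^esub> (x \<oplus>\<^bsub>L n\<^esub> y) = a \<odot>\<^bsub>L n\<^esub> x \<oplus>\<^bsub>L n\<^esub> a \<odot>\<^bsub>L n\<^esub> y"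
    unfolding f g g' L_add gfilt.add_seqc[OF gF g(1) g'(1)] smult_seqc[OF f(1) gfilt.gseq_add[OF gF g(1) g'(1)]]
      smult_seqc[OF f(1) g(1)] smult_seqc[OF f(1) g'(1)]
      gfilt.add_seqc[OF gF bilin.conv_gseq[OF bS f(1) g(1)] bilin.conv_gseq[OF bS f(1) g'(1)]]
    by (rule gfilt.seqc_eq_fun[OF gF], rule bilin.conv_addR[OF bS])
       (auto simp: gc[OF f(1)] gcF[OF g(1)] gcF[OF g'(1)])
  show "a \<otimes>\<^bsub>Rg\<^esub> b \<odot>\<^bsub>L n\<^esub> x = a \<odot>\<^bsub>L n\<^esub> (b \<odot>\<^bsub>L n\<^esub> x)"
    unfolding f f' g mult_seqc[OF f(1) f'(1)] smult_seqc[OF bR.conv_gseq[OF f(1) f'(1)] g(1)]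
      smult_seqc[OF f'(1) g(1)] smult_seqc[OF f(1) bilin.conv_gseq[OF bS f'(1) g(1)]]
    by (rule arg_cong[where f="seqc R (F n) m"], rule conv_assoc[OF bR bS bS bS])
       (auto simp: gc[OF f(1)] gc[OF f'(1)] gcF[OF g(1)] Fn.smult_assoc1)
next
  note gcF = gfilt.gseqC[OF gF]
  interpret Fn: module R "F n" by (rule modF)
  have g1: "gseq R RM m (delta RM 0 \<one>\<^bsub>R\<^esub>)" by (rule bR.gA.gseq_delta) simp
  fix x assume x: "x \<in> carrier (L n)"
  obtain g where g: "gseq R (F n) m g" "x = seqc R (F n) m g" using L_obtain[OF x] .
  show "\<one>\<^bsub>Rg\<^esub> \<odot>\<^bsub>L n\<^esub> x = x"
    unfolding Rg_one g smult_seqc[OF g1 g(1)]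
  proof (rule gfilt.seqc_eq_fun[OF gF])
    fix t show "conv (F n) (\<lambda>s x. s \<odot>\<^bsub>F n\<^esub> x) (delta RM 0 \<one>\<^bsub>R\<^esub>) g t = g t"
    proof -
      have "conv (F n) (\<lambda>s x. s \<odot>\<^bsub>F n\<^esub> x) (delta RM 0 \<one>\<^bsub>R\<^esub>) g t = (if 0 \<le> t then \<one>\<^bsub>R\<^esub> \<odot>\<^bsub>F n\<^esub> g (t - 0) else \<zero>\<^bsub>F n\<^esub>)"
        by (rule conv_deltaL[OF bS]) (auto simp: gcF[OF g(1)])
      then show ?thesis by (simp add: gcF[OF g(1)])
    qed
  qed
qed


definition Dseq :: "nat \<Rightarrow> (nat \<Rightarrow> 'f) \<Rightarrow> nat \<Rightarrow> 'f" where
  "Dseq n f = (\<lambda>k. if k = 0 then \<zero>\<^bsub>F n\<^esub> else d (Suc n) (f (k - 1)))"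

lemma d_add: "x \<in> carrier (F (Suc n)) \<Longrightarrow> y \<in> carrier (F (Suc n)) \<Longrightarrow>
  d (Suc n) (x \<oplus>\<^bsub>F (Suc n)\<^esub> y) = d (Suc n) x \<oplus>\<^bsub>F n\<^esub> d (Suc n) y"
  using linD unfolding linear_map_def by blast
lemma d_car: "x \<in> carrier (F (Suc n)) \<Longrightarrow> d (Suc n) x \<in> carrier (F n)"
  using linD unfolding linear_map_def by blast
lemma d_smult: "s \<in> carrier R \<Longrightarrow> x \<in> carrier (F (Suc n)) \<Longrightarrow>
  d (Suc n) (s \<odot>\<^bsub>F (Suc n)\<^esub> x) = s \<odot>\<^bsub>F n\<^esub> d (Suc n) x"
  using linD unfolding linear_map_def by blast

lemma d_hom: "addhom (F (Suc n)) (F n) (d (Suc n))"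
  unfolding addhom_def addhom_axioms_def
  using module.axioms(2)[OF modF] d_add d_car by blast

lemma d_filt: "x \<in> mpow_mod R (F (Suc n)) m i \<Longrightarrow> d (Suc n) x \<in> mpow_mod R (F n) m (Suc i)"
  using linear_filt[OF modF[of "Suc n"] modF[of n] mI linD[of n] minl[of n], of x i] by simp

lemma F_zero[simp]: "\<zero>\<^bsub>F n\<^esub> \<in> carrier (F n)"
  using abelian_monoid.zero_closed[OF abelian_group.axioms(1)[OF module.axioms(2)[OF modF]]] .

lemma Dseq_N: "(\<And>i. f i \<in> mpow_mod R (F (Suc n)) m i) \<Longrightarrow> Dseq n f k \<in> mpow_mod R (F n) m k"
  unfolding Dseq_def using d_filt gfilt.Nzero[OF gF] by (cases k) auto

lemma Dseq_gseq: assumes f: "gseq R (F (Suc n)) m f" shows "gseq R (F n) m (Dseq n f)"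
proof -
  have fN: "\<And>i. f i \<in> mpow_mod R (F (Suc n)) m i" using f unfolding gseq_def by auto
  obtain K where K: "\<And>i. i \<ge> K \<Longrightarrow> f i \<in> mpow_mod R (F (Suc n)) m (Suc i)" using f unfolding gseq_def by auto
  have "Dseq n f k \<in> mpow_mod R (F n) m (Suc k)" if k: "k \<ge> Suc K" for k
  proof -
    obtain j where j: "k = Suc j" "j \<ge> K" using k by (cases k) auto
    show ?thesis unfolding Dseq_def using d_filt[OF K[OF j(2)]] j by simp
  qed
  then show ?thesis unfolding gseq_def using Dseq_N[OF fN] by blast
qed

lemma Dseq_eqv: assumes e: "eqv R (F (Suc n)) m f g" shows "eqv R (F n) m (Dseq n f) (Dseq n g)"
proof -
  have fN: "\<And>i. f i \<in> mpow_mod R (F (Suc n)) m i" and gN: "\<And>i. g i \<in> mpow_mod R (F (Suc n)) m i"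
    and dd: "\<And>i. f i \<ominus>\<^bsub>F (Suc n)\<^esub> g i \<in> mpow_mod R (F (Suc n)) m (Suc i)"
    using e unfolding eqv_def by auto
  have "Dseq n f k \<ominus>\<^bsub>F n\<^esub> Dseq n g k \<in> mpow_mod R (F n) m (Suc k)" for k
  proof (cases k)
    case 0 then show ?thesis unfolding Dseq_def
      using abelian_group.gL4[OF module.axioms(2)[OF modF], of "\<zero>\<^bsub>F n\<^esub>" n] gfilt.Nzero[OF gF] by simp
  next
    case (Suc j)
    have "Dseq n f k \<ominus>\<^bsub>F n\<^esub> Dseq n g k = d (Suc n) (f j \<ominus>\<^bsub>F (Suc n)\<^esub> g j)"
      unfolding Dseq_def using Suc addhom.hminus[OF d_hom] gfilt.Ncar[OF gF fN] gfilt.Ncar[OF gF gN] by simp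
    then show ?thesis using d_filt[OF dd[of j]] Suc by simp
  qed
  then show ?thesis unfolding eqv_def using Dseq_N[OF fN] Dseq_N[OF gN] by blast
qed

lemma lin_diff_eq: "lin_diff R m F d (Suc n) c = seqc R (F n) m (Dseq n (rp (Suc n) c))"
  by (simp add: lin_diff_def seqc_def Dseq_def fun_eq_iff)

lemma D_seqc: assumes f: "gseq R (F (Suc n)) m f"
  shows "lin_diff R m F d (Suc n) (seqc R (F (Suc n)) m f) = seqc R (F n) m (Dseq n f)"
  unfolding lin_diff_eq
  by (rule gfilt.seqc_eqI[OF gF], rule Dseq_eqv, rule gfilt.rep_seqc[OF gF f])


lemma Dseq_conv: assumes a: "\<And>i. a i \<in> carrier R" and g: "\<And>i. g i \<in> carrier (F (Suc n))"
  shows "Dseq n (conv (F (Suc n)) (\<lambda>s x. s \<odot>\<^bsub>F (Suc n)\<^esub> x) a g) k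
       = conv (F n) (\<lambda>s x. s \<odot>\<^bsub>F n\<^esub> x) a (Dseq n g) k"
proof -
  interpret Fn: module R "F n" by (rule modF)
  interpret FS: module R "F (Suc n)" by (rule modF)
  have Dg: "\<And>i. Dseq n g i \<in> carrier (F n)" unfolding Dseq_def using d_car g by simp
  show ?thesis
  proof (cases k)
    case 0
    then show ?thesis unfolding conv_def Dseq_def using a by (simp add: Fn.finsum_insert)
  next
    case (Suc j)
    have "Dseq n (conv (F (Suc n)) (\<lambda>s x. s \<odot>\<^bsub>F (Suc n)\<^esub> x) a g) k
        = d (Suc n) (finsum (F (Suc n)) (\<lambda>i. a i \<odot>\<^bsub>F (Suc n)\<^esub> g (j - i)) {..j})"
      unfolding Dseq_def conv_def using Suc by simp
    also have "\<dots> = finsum (F n) (\<lambda>i. d (Suc n) (a i \<odot>\<^bsub>F (Suc n)\<^esub> g (j - i))) {..j}"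
      by (rule addhom.hsum[OF d_hom]) (auto simp: a g)
    also have "\<dots> = finsum (F n) (\<lambda>i. a i \<odot>\<^bsub>F n\<^esub> Dseq n g (Suc j - i)) {..j}"
      by (intro Fn.finsum_cong) (auto simp: a g d_smult Dseq_def Suc_diff_le d_car)
    also have "\<dots> = a (Suc j) \<odot>\<^bsub>F n\<^esub> Dseq n g (Suc j - Suc j) \<oplus>\<^bsub>F n\<^esub> finsum (F n) (\<lambda>i. a i \<odot>\<^bsub>F n\<^esub> Dseq n g (Suc j - i)) {..j}"
    proof -
      have z: "a (Suc j) \<odot>\<^bsub>F n\<^esub> Dseq n g (Suc j - Suc j) = \<zero>\<^bsub>F n\<^esub>" by (simp add: Dseq_def a)
      have c: "finsum (F n) (\<lambda>i. a i \<odot>\<^bsub>F n\<^esub> Dseq n g (Suc j - i)) {..j} \<in> carrier (F n)"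
        by (rule Fn.finsum_closed) (auto simp: a Dg)
      show ?thesis using z c by simp
    qed
    also have "\<dots> = finsum (F n) (\<lambda>i. a i \<odot>\<^bsub>F n\<^esub> Dseq n g (Suc j - i)) {..Suc j}"
      by (rule Fn.finsum_Suc[symmetric]) (auto simp: a Dg)
    finally show ?thesis unfolding conv_def using Suc by simp
  qed
qed

lemma L_zero_seqc: "gr_cls R (F n) m 0 \<zero>\<^bsub>F n\<^esub> = seqc R (F n) m (\<lambda>i. \<zero>\<^bsub>F n\<^esub>)"
  unfolding gr_cls_seqc delta_def by (rule gfilt.seqc_eq_fun[OF gF]) simp

lemma lin_linear: "linear_map Rg (L (Suc n)) (L n) (lin_diff R m F d (Suc n))"
  unfolding linear_map_def
proof (intro conjI ballI)
  note gcF = gfilt.gseqC[OF gF]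
  note gc = bR.gA.gseqC[simplified]
  interpret Fn: module R "F n" by (rule modF)
  show "lin_diff R m F d (Suc n) \<in> carrier (L (Suc n)) \<rightarrow> carrier (L n)"
  proof
    fix x assume x: "x \<in> carrier (L (Suc n))"
    obtain f where f: "gseq R (F (Suc n)) m f" "x = seqc R (F (Suc n)) m f" using L_obtain[OF x] .
    show "lin_diff R m F d (Suc n) x \<in> carrier (L n)"
      unfolding f D_seqc[OF f(1)] L_carrier by (rule gfilt.seqc_carrier[OF gF Dseq_gseq[OF f(1)]])
  qed
  fix x y assume x: "x \<in> carrier (L (Suc n))" and y: "y \<in> carrier (L (Suc n))"
  obtain f where f: "gseq R (F (Suc n)) m f" "x = seqc R (F (Suc n)) m f" using L_obtain[OF x] .
  obtain g where g: "gseq R (F (Suc n)) m g" "y = seqc R (F (Suc n)) m g" using L_obtain[OF y] .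
  show "lin_diff R m F d (Suc n) (x \<oplus>\<^bsub>L (Suc n)\<^esub> y) =
        lin_diff R m F d (Suc n) x \<oplus>\<^bsub>L n\<^esub> lin_diff R m F d (Suc n) y"
    unfolding f g L_add gfilt.add_seqc[OF gF f(1) g(1)] D_seqc[OF gfilt.gseq_add[OF gF f(1) g(1)]]
      D_seqc[OF f(1)] D_seqc[OF g(1)] gfilt.add_seqc[OF gF Dseq_gseq[OF f(1)] Dseq_gseq[OF g(1)]]
    by (rule gfilt.seqc_eq_fun[OF gF]) (simp add: Dseq_def d_add gcF[OF f(1)] gcF[OF g(1)])
next
  note gcF = gfilt.gseqC[OF gF]
  note gc = bR.gA.gseqC[simplified]
  fix a x assume a: "a \<in> carrier Rg" and x: "x \<in> carrier (L (Suc n))"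
  obtain f where f: "gseq R RM m f" "a = seqc R RM m f" using Rg_obtain[OF a] .
  obtain g where g: "gseq R (F (Suc n)) m g" "x = seqc R (F (Suc n)) m g" using L_obtain[OF x] .
  show "lin_diff R m F d (Suc n) (a \<odot>\<^bsub>L (Suc n)\<^esub> x) = a \<odot>\<^bsub>L n\<^esub> lin_diff R m F d (Suc n) x"
    unfolding f g smult_seqc[OF f(1) g(1)] D_seqc[OF bilin.conv_gseq[OF bS f(1) g(1)]]
      D_seqc[OF g(1)] smult_seqc[OF f(1) Dseq_gseq[OF g(1)]]
    by (rule gfilt.seqc_eq_fun[OF gF], rule Dseq_conv) (auto simp: gc[OF f(1)] gcF[OF g(1)])
qed

lemma lin_dd: assumes x: "x \<in> carrier (L (Suc (Suc n)))"
  shows "lin_diff R m F d (Suc n) (lin_diff R m F d (Suc (Suc n)) x) = \<zero>\<^bsub>L n\<^esub>"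
proof -
  note gcF = gfilt.gseqC[OF gF]
  obtain f where f: "gseq R (F (Suc (Suc n))) m f" "x = seqc R (F (Suc (Suc n))) m f" using L_obtain[OF x] .
  show ?thesis
    unfolding f D_seqc[OF f(1)] D_seqc[OF Dseq_gseq[OF f(1)]] L_zero L_zero_seqc
  proof (rule gfilt.seqc_eq_fun[OF gF])
    fix k show "Dseq n (Dseq (Suc n) f) k = \<zero>\<^bsub>F n\<^esub>"
    proof (cases k)
      case 0 then show ?thesis by (simp add: Dseq_def)
    next
      case (Suc j)
      show ?thesis
      proof (cases j)
        case 0 then show ?thesis using Suc addhom.hzero[OF d_hom] by (simp add: Dseq_def)
      next
        case (Suc i) then show ?thesis using \<open>k = Suc j\<close> dd gcF[OF f(1)] by (simp add: Dseq_def)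
      qed
    qed
  qed
qed

end


context main begin

abbreviation "ml \<equiv> mu_lin R m F mu"

lemma mu_seqc: assumes f: "gseq R (F n) m f" and g: "gseq R (F k) m g"
  shows "ml n k (seqc R (F n) m f) (seqc R (F k) m g) = seqc R (F (n + k)) m (conv (F (n + k)) (mu n k) f g)"
  unfolding mu_lin_def by (rule bilin.conv_seqc[OF bMu f g])

lemma ml_closed: assumes x: "x \<in> carrier (L n)" and y: "y \<in> carrier (L k)"
  shows "ml n k x y \<in> carrier (L (n + k))"
proof -
  obtain f where f: "gseq R (F n) m f" "x = seqc R (F n) m f" using L_obtain[OF x] .
  obtain g where g: "gseq R (F k) m g" "y = seqc R (F k) m g" using L_obtain[OF y] .
  show ?thesis unfolding f g mu_seqc[OF f(1) g(1)] L_carrier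
    by (rule gfilt.seqc_carrier[OF gF bilin.conv_gseq[OF bMu f(1) g(1)]])
qed

lemma ml_addL: assumes x: "x \<in> carrier (L n)" and x': "x' \<in> carrier (L n)" and y: "y \<in> carrier (L k)"
  shows "ml n k (x \<oplus>\<^bsub>L n\<^esub> x') y = ml n k x y \<oplus>\<^bsub>L (n + k)\<^esub> ml n k x' y"
proof -
  note gcF = gfilt.gseqC[OF gF]
  obtain f where f: "gseq R (F n) m f" "x = seqc R (F n) m f" using L_obtain[OF x] .
  obtain f' where f': "gseq R (F n) m f'" "x' = seqc R (F n) m f'" using L_obtain[OF x'] .
  obtain g where g: "gseq R (F k) m g" "y = seqc R (F k) m g" using L_obtain[OF y] .
  show ?thesis
    unfolding f f' g L_add gfilt.add_seqc[OF gF f(1) f'(1)] mu_seqc[OF gfilt.gseq_add[OF gF f(1) f'(1)] g(1)]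
      mu_seqc[OF f(1) g(1)] mu_seqc[OF f'(1) g(1)]
      gfilt.add_seqc[OF gF bilin.conv_gseq[OF bMu f(1) g(1)] bilin.conv_gseq[OF bMu f'(1) g(1)]]
    by (rule gfilt.seqc_eq_fun[OF gF], rule bilin.conv_addL[OF bMu])
       (auto simp: gcF[OF f(1)] gcF[OF f'(1)] gcF[OF g(1)])
qed

lemma ml_addR: assumes x: "x \<in> carrier (L n)" and y: "y \<in> carrier (L k)" and y': "y' \<in> carrier (L k)"
  shows "ml n k x (y \<oplus>\<^bsub>L k\<^esub> y') = ml n k x y \<oplus>\<^bsub>L (n + k)\<^esub> ml n k x y'"
proof -
  note gcF = gfilt.gseqC[OF gF]
  obtain f where f: "gseq R (F n) m f" "x = seqc R (F n) m f" using L_obtain[OF x] .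
  obtain g where g: "gseq R (F k) m g" "y = seqc R (F k) m g" using L_obtain[OF y] .
  obtain g' where g': "gseq R (F k) m g'" "y' = seqc R (F k) m g'" using L_obtain[OF y'] .
  show ?thesis
    unfolding f g g' L_add gfilt.add_seqc[OF gF g(1) g'(1)] mu_seqc[OF f(1) gfilt.gseq_add[OF gF g(1) g'(1)]]
      mu_seqc[OF f(1) g(1)] mu_seqc[OF f(1) g'(1)]
      gfilt.add_seqc[OF gF bilin.conv_gseq[OF bMu f(1) g(1)] bilin.conv_gseq[OF bMu f(1) g'(1)]]
    by (rule gfilt.seqc_eq_fun[OF gF], rule bilin.conv_addR[OF bMu])
       (auto simp: gcF[OF f(1)] gcF[OF g'(1)] gcF[OF g(1)])
qed

lemma ml_smL: assumes a: "a \<in> carrier Rg" and x: "x \<in> carrier (L n)" and y: "y \<in> carrier (L k)"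
  shows "ml n k (a \<odot>\<^bsub>L n\<^esub> x) y = a \<odot>\<^bsub>L (n + k)\<^esub> ml n k x y"
proof -
  note gcF = gfilt.gseqC[OF gF]
  note gc = bR.gA.gseqC[simplified]
  obtain h where h: "gseq R RM m h" "a = seqc R RM m h" using Rg_obtain[OF a] .
  obtain f where f: "gseq R (F n) m f" "x = seqc R (F n) m f" using L_obtain[OF x] .
  obtain g where g: "gseq R (F k) m g" "y = seqc R (F k) m g" using L_obtain[OF y] .
  show ?thesis
    unfolding h f g smult_seqc[OF h(1) f(1)] mu_seqc[OF bilin.conv_gseq[OF bS h(1) f(1)] g(1)]
      mu_seqc[OF f(1) g(1)] smult_seqc[OF h(1) bilin.conv_gseq[OF bMu f(1) g(1)]]
    by (rule arg_cong[where f="seqc R (F (n + k)) m"], rule conv_assoc[OF bS bMu bMu bS])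
       (auto simp: gc[OF h(1)] gcF[OF f(1)] gcF[OF g(1)] mu_smL)
qed

lemma ml_smR: assumes a: "a \<in> carrier Rg" and x: "x \<in> carrier (L n)" and y: "y \<in> carrier (L k)"
  shows "ml n k x (a \<odot>\<^bsub>L k\<^esub> y) = a \<odot>\<^bsub>L (n + k)\<^esub> ml n k x y"
proof -
  note gcF = gfilt.gseqC[OF gF]
  note gc = bR.gA.gseqC[simplified]
  obtain h where h: "gseq R RM m h" "a = seqc R RM m h" using Rg_obtain[OF a] .
  obtain f where f: "gseq R (F n) m f" "x = seqc R (F n) m f" using L_obtain[OF x] .
  obtain g where g: "gseq R (F k) m g" "y = seqc R (F k) m g" using L_obtain[OF y] .
  show ?thesis
    unfolding h f g smult_seqc[OF h(1) g(1)] mu_seqc[OF f(1) bilin.conv_gseq[OF bS h(1) g(1)]]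
      mu_seqc[OF f(1) g(1)] smult_seqc[OF h(1) bilin.conv_gseq[OF bMu f(1) g(1)]]
    by (rule gfilt.seqc_eq_fun[OF gF], rule conv_assoc2[OF bS bMu bMu bS])
       (auto simp: gc[OF h(1)] gcF[OF f(1)] gcF[OF g(1)] mu_smR)
qed

lemma unit_gseq: "gseq R (F 0) m (delta (F 0) 0 e)"
  by (rule gfilt.gseq_delta[OF gF]) (simp add: e_car)

lemma unit_car: "gr_cls R (F 0) m 0 e \<in> carrier (L 0)"
  unfolding gr_cls_seqc L_carrier by (rule gfilt.seqc_carrier[OF gF unit_gseq])

lemma ml_unitL: assumes x: "x \<in> carrier (L n)" shows "ml 0 n (gr_cls R (F 0) m 0 e) x = x"
proof -
  note gcF = gfilt.gseqC[OF gF]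
  obtain f where f: "gseq R (F n) m f" "x = seqc R (F n) m f" using L_obtain[OF x] .
  show ?thesis unfolding f gr_cls_seqc mu_seqc[OF unit_gseq f(1)]
  proof (simp, rule gfilt.seqc_eq_fun[OF gF])
    fix t
    have "conv (F (0 + n)) (mu 0 n) (delta (F 0) 0 e) f t = (if 0 \<le> t then mu 0 n e (f (t - 0)) else \<zero>\<^bsub>F (0 + n)\<^esub>)"
      by (rule conv_deltaL[OF bMu]) (auto simp: e_car gcF[OF f(1)])
    then show "conv (F n) (mu 0 n) (delta (F 0) 0 e) f t = f t" by (simp add: unitL gcF[OF f(1)])
  qed
qed

lemma ml_unitR: assumes x: "x \<in> carrier (L n)" shows "ml n 0 x (gr_cls R (F 0) m 0 e) = x"
proof -
  note gcF = gfilt.gseqC[OF gF]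
  obtain f where f: "gseq R (F n) m f" "x = seqc R (F n) m f" using L_obtain[OF x] .
  show ?thesis unfolding f gr_cls_seqc mu_seqc[OF f(1) unit_gseq]
  proof (simp, rule gfilt.seqc_eq_fun[OF gF])
    fix t
    have "conv (F (n + 0)) (mu n 0) f (delta (F 0) 0 e) t = (if 0 \<le> t then mu n 0 (f (t - 0)) e else \<zero>\<^bsub>F (n + 0)\<^esub>)"
      by (rule conv_deltaR[OF bMu]) (auto simp: e_car gcF[OF f(1)])
    then show "conv (F n) (mu n 0) f (delta (F 0) 0 e) t = f t" by (simp add: unitR gcF[OF f(1)])
  qed
qed

lemma ml_assoc: assumes x: "x \<in> carrier (L n)" and y: "y \<in> carrier (L k)" and z: "z \<in> carrier (L l)"
  shows "ml (n + k) l (ml n k x y) z = ml n (k + l) x (ml k l y z)"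
proof -
  note gcF = gfilt.gseqC[OF gF]
  obtain f where f: "gseq R (F n) m f" "x = seqc R (F n) m f" using L_obtain[OF x] .
  obtain g where g: "gseq R (F k) m g" "y = seqc R (F k) m g" using L_obtain[OF y] .
  obtain h where h: "gseq R (F l) m h" "z = seqc R (F l) m h" using L_obtain[OF z] .
  have b3: "bilin R (F (n + k)) (F l) (F (n + (k + l))) (mu (n + k) l) m"
    using bMu[of "n + k" l] by (simp add: add.assoc)
  have e: "n + k + l = n + (k + l)" by simp
  show ?thesis
    unfolding f g h mu_seqc[OF f(1) g(1)] mu_seqc[OF g(1) h(1)]
      mu_seqc[OF bilin.conv_gseq[OF bMu f(1) g(1)] h(1)] mu_seqc[OF f(1) bilin.conv_gseq[OF bMu g(1) h(1)]]
    unfolding e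
    by (rule arg_cong[where f="seqc R (F (n + (k + l))) m"], rule conv_assoc[OF bMu b3 bMu bMu])
       (auto simp: gcF[OF f(1)] gcF[OF g(1)] gcF[OF h(1)] mu_assoc)
qed

lemma ml_cls: assumes x: "x \<in> mpow_mod R (F n) m i" and y: "y \<in> mpow_mod R (F k) m j"
  shows "ml n k (gr_cls R (F n) m i x) (gr_cls R (F k) m j y) = gr_cls R (F (n + k)) m (i + j) (mu n k x y)"
proof -
  have gx: "gseq R (F n) m (delta (F n) i x)" by (rule gfilt.gseq_delta[OF gF x])
  have gy: "gseq R (F k) m (delta (F k) j y)" by (rule gfilt.gseq_delta[OF gF y])
  have xc: "x \<in> carrier (F n)" using gfilt.Ncar[OF gF x] .
  have yc: "y \<in> carrier (F k)" using gfilt.Ncar[OF gF y] .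
  show ?thesis unfolding gr_cls_seqc mu_seqc[OF gx gy]
  proof (rule gfilt.seqc_eq_fun[OF gF])
    fix t
    have dy: "\<And>i. delta (F k) j y i \<in> carrier (F k)" using yc by (simp add: delta_def)
    have "conv (F (n + k)) (mu n k) (delta (F n) i x) (delta (F k) j y) t =
      (if i \<le> t then mu n k x (delta (F k) j y (t - i)) else \<zero>\<^bsub>F (n + k)\<^esub>)"
      by (rule conv_deltaL[OF bMu xc dy])
    then show "conv (F (n + k)) (mu n k) (delta (F n) i x) (delta (F k) j y) t = delta (F (n + k)) (i + j) (mu n k x y) t"
      using xc yc bilin.zeroR[OF bMu xc] by (auto simp: delta_def)
  qed
qed

end


lemma bilin_zero: assumes A: "module S A" and B: "module S B" and P: "module S P" and I: "I \<subseteq> carrier S"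
  shows "bilin S A B P (\<lambda>x y. \<zero>\<^bsub>P\<^esub>) I"
proof -
  interpret P: module S P by fact
  show ?thesis by (rule bilin.intro[OF A B P I]) simp_all
qed

lemma conv_zero_map: "abelian_group Q \<Longrightarrow> conv Q (\<lambda>x y. \<zero>\<^bsub>Q\<^esub>) f g t = \<zero>\<^bsub>Q\<^esub>"
  unfolding conv_def by (simp add: abelian_monoid.finsum_zero[OF abelian_group.axioms(1)])

context main begin

lemma F_ag: "abelian_group (F n)" by (rule module.axioms(2)[OF modF])

lemma sgn_hom: "addhom (F j) (F j) (sgn_mod (F j) s)"
proof (cases "even s")
  case True then show ?thesis unfolding sgn_mod_def using addhom_id'[OF F_ag] by simp
next
  case False
  interpret Fj: abelian_group "F j" by (rule F_ag)
  have "addhom (F j) (F j) (\<lambda>x. \<ominus>\<^bsub>F j\<^esub> x)"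
    by (rule addhom.intro[OF F_ag F_ag], rule addhom_axioms.intro) (simp_all add: Fj.minus_add)
  then show ?thesis unfolding sgn_mod_def using False by simp
qed

lemma L_neg: assumes f: "gseq R (F j) m f"
  shows "a_inv (L j) (seqc R (F j) m f) = seqc R (F j) m (\<lambda>i. \<ominus>\<^bsub>F j\<^esub> f i)"
proof -
  interpret Lj: abelian_group "L j" by (rule L_abelian)
  interpret Fj: abelian_group "F j" by (rule F_ag)
  have c1: "seqc R (F j) m f \<in> carrier (L j)" unfolding L_carrier by (rule gfilt.seqc_carrier[OF gF f])
  have gn: "gseq R (F j) m (\<lambda>i. \<ominus>\<^bsub>F j\<^esub> f i)" by (rule gfilt.gseq_neg[OF gF f])
  have c2: "seqc R (F j) m (\<lambda>i. \<ominus>\<^bsub>F j\<^esub> f i) \<in> carrier (L j)" unfolding L_carrier by (rule gfilt.seqc_carrier[OF gF gn])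
  have "seqc R (F j) m (\<lambda>i. \<ominus>\<^bsub>F j\<^esub> f i) \<oplus>\<^bsub>L j\<^esub> seqc R (F j) m f = \<zero>\<^bsub>L j\<^esub>"
    unfolding L_add gfilt.add_seqc[OF gF gn f] L_zero L_zero_seqc
    by (rule gfilt.seqc_eq_fun[OF gF]) (simp add: Fj.l_neg gfilt.gseqC[OF gF f])
  then show ?thesis using Lj.minus_equality[OF _ c1 c2] by simp
qed

lemma sgn_seqc: assumes f: "gseq R (F j) m f"
  shows "sgn_mod (L j) s (seqc R (F j) m f) = seqc R (F j) m (\<lambda>i. sgn_mod (F j) s (f i))"
  unfolding sgn_mod_def using L_neg[OF f] by simp

lemma sgn_gseq: "gseq R (F j) m f \<Longrightarrow> gseq R (F j) m (\<lambda>i. sgn_mod (F j) s (f i))"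
  unfolding sgn_mod_def using gfilt.gseq_neg[OF gF] by (cases "even s") simp_all

lemma ml_comm: assumes x: "x \<in> carrier (L n)" and y: "y \<in> carrier (L k)"
  shows "ml n k x y = sgn_mod (L (n + k)) (n * k) (ml k n y x)"
proof -
  note gcF = gfilt.gseqC[OF gF]
  obtain f where f: "gseq R (F n) m f" "x = seqc R (F n) m f" using L_obtain[OF x] .
  obtain g where g: "gseq R (F k) m g" "y = seqc R (F k) m g" using L_obtain[OF y] .
  have e: "k + n = n + k" by simp
  have b': "bilin R (F k) (F n) (F (n + k)) (mu k n) m" using bMu[of k n] by (simp add: add.commute)
  show ?thesis
    unfolding f g mu_seqc[OF f(1) g(1)] mu_seqc[OF g(1) f(1)] e
    unfolding sgn_seqc[OF bilin.conv_gseq[OF b' g(1) f(1)]]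
  proof (rule gfilt.seqc_eq_fun[OF gF])
    fix t show "conv (F (n + k)) (mu n k) f g t = sgn_mod (F (n + k)) (n * k) (conv (F (n + k)) (mu k n) g f t)"
      by (rule conv_comm[OF bMu b' sgn_hom]) (auto simp: gcF[OF f(1)] gcF[OF g(1)] intro: mu_comm)
  qed
qed

lemma ml_odd: assumes n: "odd n" and x: "x \<in> carrier (L n)"
  shows "ml n n x x = \<zero>\<^bsub>L (n + n)\<^esub>"
proof -
  note gcF = gfilt.gseqC[OF gF]
  interpret Q: abelian_group "F (n + n)" by (rule F_ag)
  obtain f where f: "gseq R (F n) m f" "x = seqc R (F n) m f" using L_obtain[OF x] .
  show ?thesis unfolding f mu_seqc[OF f(1) f(1)] L_zero L_zero_seqc
  proof (rule gfilt.seqc_eq_fun[OF gF])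
    fix t
    have "finsum (F (n + n)) (\<lambda>i. mu n n (f i) (f (t - i))) {0..t} = \<zero>\<^bsub>F (n + n)\<^esub>"
    proof (rule Q.sym_sum_zero)
      show "\<And>i. mu n n (f i) (f (t - i)) \<in> carrier (F (n + n))" by (simp add: mu_closed gcF[OF f(1)])
      fix i assume i: "i \<in> {0..t}"
      have "mu n n (f (0 + t - i)) (f (t - (0 + t - i))) = mu n n (f (t - i)) (f i)" using i by simp
      also have "\<dots> = sgn_mod (F (n + n)) (n * n) (mu n n (f i) (f (t - i)))"
        by (rule mu_comm) (simp_all add: gcF[OF f(1)])
      also have "\<dots> = \<ominus>\<^bsub>F (n + n)\<^esub> mu n n (f i) (f (t - i))" using n by (simp add: sgn_mod_def)
      finally show "mu n n (f (0 + t - i)) (f (t - (0 + t - i))) = \<ominus>\<^bsub>F (n + n)\<^esub> mu n n (f i) (f (t - i))" .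
      assume "2 * i = 0 + t"
      then have "t - i = i" by simp
      then show "mu n n (f i) (f (t - i)) = \<zero>\<^bsub>F (n + n)\<^esub>" using mu_odd[OF n] gcF[OF f(1)] by simp
    qed
    then show "conv (F (n + n)) (mu n n) f f t = \<zero>\<^bsub>F (n + n)\<^esub>"
      unfolding conv_def by (simp add: atLeast0AtMost)
  qed
qed

lemma Dseq_Sh: "Dseq p f = Sh (F p) (d (Suc p)) f"
  by (simp add: Dseq_def Sh_def)

lemma ml_leib: assumes nk: "0 < n + k" and x: "x \<in> carrier (L n)" and y: "y \<in> carrier (L k)"
  shows "lin_diff R m F d (n + k) (ml n k x y) =
     (if n = 0 then \<zero>\<^bsub>L (n + k - 1)\<^esub> else ml (n - 1) k (lin_diff R m F d n x) y)
     \<oplus>\<^bsub>L (n + k - 1)\<^esub>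
     (if k = 0 then \<zero>\<^bsub>L (n + k - 1)\<^esub> else sgn_mod (L (n + k - 1)) n (ml n (k - 1) x (lin_diff R m F d k y)))"
proof -
  note gcF = gfilt.gseqC[OF gF]
  obtain f where f: "gseq R (F n) m f" "x = seqc R (F n) m f" using L_obtain[OF x] .
  obtain g where g: "gseq R (F k) m g" "y = seqc R (F k) m g" using L_obtain[OF y] .
  have fc: "\<And>i. f i \<in> carrier (F n)" using gcF[OF f(1)] .
  have gc: "\<And>i. g i \<in> carrier (F k)" using gcF[OF g(1)] .
  show ?thesis
  proof (cases n)
    case 0
    then obtain b where k: "k = Suc b" using nk by (cases k) auto
    have b0: "bilin R (F 0) (F (Suc b)) (F (Suc b)) (mu 0 (Suc b)) m" using bMu[of 0 "Suc b"] by simp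
    have bA: "bilin R (F 0) (F (Suc b)) (F b) (\<lambda>x y. \<zero>\<^bsub>F b\<^esub>) m" by (rule bilin_zero[OF modF modF modF mI])
    have bB: "bilin R (F 0) (F b) (F b) (mu 0 b) m" using bMu[of 0 b] by simp
    have f0: "gseq R (F 0) m f" using f 0 by simp
    have pt: "\<And>x y. x \<in> carrier (F 0) \<Longrightarrow> y \<in> carrier (F (Suc b)) \<Longrightarrow>
       d (Suc b) (mu 0 (Suc b) x y) = \<zero>\<^bsub>F b\<^esub> \<oplus>\<^bsub>F b\<^esub> sgn_mod (F b) 0 (mu 0 b x (d (Suc b) y))"
      using leibniz[of 0 "Suc b"] by simp
    have key: "Dseq b (conv (F (Suc b)) (mu 0 (Suc b)) f g) t =
       conv (F b) (\<lambda>x y. \<zero>\<^bsub>F b\<^esub>) (Sh (F 0) (\<lambda>x. x) f) g t \<oplus>\<^bsub>F b\<^esub>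
       sgn_mod (F b) 0 (conv (F b) (mu 0 b) f (Dseq b g) t)" for t
      unfolding Dseq_Sh
      by (rule leib_seq[OF b0 bA bB d_hom addhom_id'[OF F_ag] d_hom sgn_hom])
         (use fc gc 0 k pt in auto)
    have gs: "gseq R (F (Suc b)) m (conv (F (Suc b)) (mu 0 (Suc b)) f g)"
      by (rule bilin.conv_gseq[OF b0 f0]) (use g k in simp)
    have gb: "gseq R (F (Suc b)) m g" using g k by simp
    have L1: "lin_diff R m F d (n + k) (ml n k x y) = seqc R (F b) m (Dseq b (conv (F (Suc b)) (mu 0 (Suc b)) f g))"
      using mu_seqc[OF f(1) g(1)] D_seqc[OF gs] unfolding f(2) g(2) 0 k by simp
    have R2: "ml n (k - 1) x (lin_diff R m F d k y) = seqc R (F b) m (conv (F b) (mu 0 b) f (Dseq b g))"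
      using mu_seqc[OF f0 Dseq_gseq[OF gb]] D_seqc[OF gb] unfolding f(2) g(2) 0 k by simp
    have gs2: "gseq R (F b) m (conv (F b) (mu 0 b) f (Dseq b g))" by (rule bilin.conv_gseq[OF bB f0 Dseq_gseq[OF gb]])
    interpret Fb: abelian_group "F b" by (rule F_ag)
    show ?thesis
      unfolding L1 R2 using 0 k
      apply (simp add: sgn_seqc[OF gs2] L_zero L_zero_seqc L_add)
      apply (subst gfilt.add_seqc[OF gF gfilt.gseq_zero[OF gF] sgn_gseq[OF gs2]])
      apply (rule gfilt.seqc_eq_fun[OF gF])
      apply (simp only: key conv_zero_map[OF F_ag])
      done
  next
    case (Suc a)
    have fa: "gseq R (F (Suc a)) m f" using f Suc by simp
    show ?thesis
    proof (cases k)
      case 0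
      have b0: "bilin R (F (Suc a)) (F 0) (F (Suc a)) (mu (Suc a) 0) m" using bMu[of "Suc a" 0] by simp
      have bA: "bilin R (F a) (F 0) (F a) (mu a 0) m" using bMu[of a 0] by simp
      have bB: "bilin R (F (Suc a)) (F 0) (F a) (\<lambda>x y. \<zero>\<^bsub>F a\<^esub>) m" by (rule bilin_zero[OF modF modF modF mI])
      have g0: "gseq R (F 0) m g" using g 0 by simp
      have pt: "\<And>x y. x \<in> carrier (F (Suc a)) \<Longrightarrow> y \<in> carrier (F 0) \<Longrightarrow>
         d (Suc a) (mu (Suc a) 0 x y) = mu a 0 (d (Suc a) x) y \<oplus>\<^bsub>F a\<^esub> \<zero>\<^bsub>F a\<^esub>"
        using leibniz[of "Suc a" 0] by simp
      have key: "Dseq a (conv (F (Suc a)) (mu (Suc a) 0) f g) t =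
         conv (F a) (mu a 0) (Dseq a f) g t \<oplus>\<^bsub>F a\<^esub>
         (conv (F a) (\<lambda>x y. \<zero>\<^bsub>F a\<^esub>) f (Sh (F 0) (\<lambda>x. x) g) t)" for t
        unfolding Dseq_Sh
        by (rule leib_seq[OF b0 bA bB d_hom d_hom addhom_id'[OF F_ag] addhom_id'[OF F_ag]])
           (use fc gc Suc 0 pt in auto)
      have gs: "gseq R (F (Suc a)) m (conv (F (Suc a)) (mu (Suc a) 0) f g)"
        by (rule bilin.conv_gseq[OF b0 fa g0])
      have L1: "lin_diff R m F d (n + k) (ml n k x y) = seqc R (F a) m (Dseq a (conv (F (Suc a)) (mu (Suc a) 0) f g))"
        using mu_seqc[OF f(1) g(1)] D_seqc[OF gs] unfolding f(2) g(2) Suc 0 by simp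
      have R1: "ml (n - 1) k (lin_diff R m F d n x) y = seqc R (F a) m (conv (F a) (mu a 0) (Dseq a f) g)"
        using mu_seqc[OF Dseq_gseq[OF fa] g0] D_seqc[OF fa] unfolding f(2) g(2) Suc 0 by simp
      have gs1: "gseq R (F a) m (conv (F a) (mu a 0) (Dseq a f) g)" by (rule bilin.conv_gseq[OF bA Dseq_gseq[OF fa] g0])
      show ?thesis
        unfolding L1 R1 using Suc 0
        apply (simp add: L_zero L_zero_seqc L_add)
        apply (subst gfilt.add_seqc[OF gF gs1 gfilt.gseq_zero[OF gF]])
        apply (rule gfilt.seqc_eq_fun[OF gF])
        apply (simp only: key conv_zero_map[OF F_ag])
        done
    next
      case (Suc b)
      have b0: "bilin R (F (Suc a)) (F (Suc b)) (F (Suc (Suc (a + b)))) (mu (Suc a) (Suc b)) m"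
        using bMu[of "Suc a" "Suc b"] by simp
      have bA: "bilin R (F a) (F (Suc b)) (F (Suc (a + b))) (mu a (Suc b)) m" using bMu[of a "Suc b"] by simp
      have bB: "bilin R (F (Suc a)) (F b) (F (Suc (a + b))) (mu (Suc a) b) m" using bMu[of "Suc a" b] by simp
      have gb: "gseq R (F (Suc b)) m g" using g Suc by simp
      have pt: "\<And>x y. x \<in> carrier (F (Suc a)) \<Longrightarrow> y \<in> carrier (F (Suc b)) \<Longrightarrow>
         d (Suc (Suc (a + b))) (mu (Suc a) (Suc b) x y) = mu a (Suc b) (d (Suc a) x) y \<oplus>\<^bsub>F (Suc (a + b))\<^esub>
           sgn_mod (F (Suc (a + b))) (Suc a) (mu (Suc a) b x (d (Suc b) y))"
        using leibniz[of "Suc a" "Suc b"] by simp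
      have key: "Dseq (Suc (a + b)) (conv (F (Suc (Suc (a + b)))) (mu (Suc a) (Suc b)) f g) t =
         conv (F (Suc (a + b))) (mu a (Suc b)) (Dseq a f) g t \<oplus>\<^bsub>F (Suc (a + b))\<^esub>
         sgn_mod (F (Suc (a + b))) (Suc a) (conv (F (Suc (a + b))) (mu (Suc a) b) f (Dseq b g) t)" for t
        unfolding Dseq_Sh
        by (rule leib_seq[OF b0 bA bB d_hom d_hom d_hom sgn_hom])
           (use fc gc \<open>n = Suc a\<close> Suc pt in auto)
      have gs: "gseq R (F (Suc (Suc (a + b)))) m (conv (F (Suc (Suc (a + b)))) (mu (Suc a) (Suc b)) f g)"
        by (rule bilin.conv_gseq[OF b0 fa gb])
      have L1: "lin_diff R m F d (n + k) (ml n k x y) =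
          seqc R (F (Suc (a + b))) m (Dseq (Suc (a + b)) (conv (F (Suc (Suc (a + b)))) (mu (Suc a) (Suc b)) f g))"
        using mu_seqc[OF f(1) g(1)] D_seqc[OF gs] unfolding f(2) g(2) Suc \<open>n = Suc a\<close> by simp
      have R1: "ml (n - 1) k (lin_diff R m F d n x) y =
          seqc R (F (Suc (a + b))) m (conv (F (Suc (a + b))) (mu a (Suc b)) (Dseq a f) g)"
        using mu_seqc[OF Dseq_gseq[OF fa] gb] D_seqc[OF fa] unfolding f(2) g(2) Suc \<open>n = Suc a\<close> by simp
      have R2: "ml n (k - 1) x (lin_diff R m F d k y) =
          seqc R (F (Suc (a + b))) m (conv (F (Suc (a + b))) (mu (Suc a) b) f (Dseq b g))"
        using mu_seqc[OF fa Dseq_gseq[OF gb]] D_seqc[OF gb] unfolding f(2) g(2) Suc \<open>n = Suc a\<close> by simp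
      have gs1: "gseq R (F (Suc (a + b))) m (conv (F (Suc (a + b))) (mu a (Suc b)) (Dseq a f) g)"
        by (rule bilin.conv_gseq[OF bA Dseq_gseq[OF fa] gb])
      have gs2: "gseq R (F (Suc (a + b))) m (conv (F (Suc (a + b))) (mu (Suc a) b) f (Dseq b g))"
        by (rule bilin.conv_gseq[OF bB fa Dseq_gseq[OF gb]])
      show ?thesis
        unfolding L1 R1 R2 using Suc \<open>n = Suc a\<close>
        apply (simp add: sgn_seqc[OF gs2] L_add)
        apply (subst gfilt.add_seqc[OF gF gs1 sgn_gseq[OF gs2]])
        apply (rule gfilt.seqc_eq_fun[OF gF])
        apply (simp only: key)
        done
    qed
  qed
qed

end


context main begin

lemma main_dg: "dg_algebra (assoc_graded R m) (lin_mod R m F) (lin_diff R m F d) (mu_lin R m F mu)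
   (gr_cls R (F 0) m 0 e)"
  unfolding dg_algebra_def
proof (intro conjI allI ballI impI)
  show "cring (assoc_graded R m)" by (rule Rg_cring)
  show "\<And>n. module (assoc_graded R m) (lin_mod R m F n)" by (rule L_module)
  show "\<And>n. linear_map (assoc_graded R m) (lin_mod R m F (Suc n)) (lin_mod R m F n) (lin_diff R m F d (Suc n))"
    by (rule lin_linear)
  show "\<And>n x. x \<in> carrier (lin_mod R m F (Suc (Suc n))) \<Longrightarrow>
      lin_diff R m F d (Suc n) (lin_diff R m F d (Suc (Suc n)) x) = \<zero>\<^bsub>lin_mod R m F n\<^esub>"
    by (rule lin_dd)
  show "\<And>n k x y. x \<in> carrier (lin_mod R m F n) \<Longrightarrow> y \<in> carrier (lin_mod R m F k) \<Longrightarrow>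
      mu_lin R m F mu n k x y \<in> carrier (lin_mod R m F (n + k))"
    by (rule ml_closed)
  show "\<And>n k x x' y. x \<in> carrier (lin_mod R m F n) \<Longrightarrow> x' \<in> carrier (lin_mod R m F n) \<Longrightarrow>
      y \<in> carrier (lin_mod R m F k) \<Longrightarrow>
      mu_lin R m F mu n k (x \<oplus>\<^bsub>lin_mod R m F n\<^esub> x') y =
      mu_lin R m F mu n k x y \<oplus>\<^bsub>lin_mod R m F (n + k)\<^esub> mu_lin R m F mu n k x' y"
    by (rule ml_addL)
  show "\<And>n k x y y'. x \<in> carrier (lin_mod R m F n) \<Longrightarrow> y \<in> carrier (lin_mod R m F k) \<Longrightarrow>
      y' \<in> carrier (lin_mod R m F k) \<Longrightarrow>
      mu_lin R m F mu n k x (y \<oplus>\<^bsub>lin_mod R m F k\<^esub> y') =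
      mu_lin R m F mu n k x y \<oplus>\<^bsub>lin_mod R m F (n + k)\<^esub> mu_lin R m F mu n k x y'"
    by (rule ml_addR)
  show "\<And>n k s x y. s \<in> carrier (assoc_graded R m) \<Longrightarrow> x \<in> carrier (lin_mod R m F n) \<Longrightarrow>
      y \<in> carrier (lin_mod R m F k) \<Longrightarrow>
      mu_lin R m F mu n k (s \<odot>\<^bsub>lin_mod R m F n\<^esub> x) y = s \<odot>\<^bsub>lin_mod R m F (n + k)\<^esub> mu_lin R m F mu n k x y"
    by (rule ml_smL)
  show "\<And>n k s x y. s \<in> carrier (assoc_graded R m) \<Longrightarrow> x \<in> carrier (lin_mod R m F n) \<Longrightarrow>
      y \<in> carrier (lin_mod R m F k) \<Longrightarrow>
      mu_lin R m F mu n k x (s \<odot>\<^bsub>lin_mod R m F k\<^esub> y) = s \<odot>\<^bsub>lin_mod R m F (n + k)\<^esub> mu_lin R m F mu n k x y"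
    by (rule ml_smR)
  show "gr_cls R (F 0) m 0 e \<in> carrier (lin_mod R m F 0)" by (rule unit_car)
  show "\<And>n x. x \<in> carrier (lin_mod R m F n) \<Longrightarrow> mu_lin R m F mu 0 n (gr_cls R (F 0) m 0 e) x = x"
    by (rule ml_unitL)
  show "\<And>n x. x \<in> carrier (lin_mod R m F n) \<Longrightarrow> mu_lin R m F mu n 0 x (gr_cls R (F 0) m 0 e) = x"
    by (rule ml_unitR)
  show "\<And>n k l x y z. x \<in> carrier (lin_mod R m F n) \<Longrightarrow> y \<in> carrier (lin_mod R m F k) \<Longrightarrow>
      z \<in> carrier (lin_mod R m F l) \<Longrightarrow>
      mu_lin R m F mu (n + k) l (mu_lin R m F mu n k x y) z = mu_lin R m F mu n (k + l) x (mu_lin R m F mu k l y z)"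
    by (rule ml_assoc)
  show "\<And>n k x y. x \<in> carrier (lin_mod R m F n) \<Longrightarrow> y \<in> carrier (lin_mod R m F k) \<Longrightarrow>
      mu_lin R m F mu n k x y = sgn_mod (lin_mod R m F (n + k)) (n * k) (mu_lin R m F mu k n y x)"
    by (rule ml_comm)
  show "\<And>n x. odd n \<Longrightarrow> x \<in> carrier (lin_mod R m F n) \<Longrightarrow>
      mu_lin R m F mu n n x x = \<zero>\<^bsub>lin_mod R m F (n + n)\<^esub>"
    by (rule ml_odd)
  show "\<And>n k x y. 0 < n + k \<Longrightarrow> x \<in> carrier (lin_mod R m F n) \<Longrightarrow> y \<in> carrier (lin_mod R m F k) \<Longrightarrow>
     lin_diff R m F d (n + k) (mu_lin R m F mu n k x y) =
     (if n = 0 then \<zero>\<^bsub>lin_mod R m F (n + k - 1)\<^esub> else mu_lin R m F mu (n - 1) k (lin_diff R m F d n x) y)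
     \<oplus>\<^bsub>lin_mod R m F (n + k - 1)\<^esub>
     (if k = 0 then \<zero>\<^bsub>lin_mod R m F (n + k - 1)\<^esub>
      else sgn_mod (lin_mod R m F (n + k - 1)) n (mu_lin R m F mu n (k - 1) x (lin_diff R m F d k y)))"
    by (rule ml_leib)
qed

end

theorem lemma2p4:
  fixes R :: "('r, 'c) ring_scheme" and m :: "'r set"
    and F :: "nat \<Rightarrow> ('r, 'f) module" and d :: "nat \<Rightarrow> 'f \<Rightarrow> 'f"
    and mu :: "nat \<Rightarrow> nat \<Rightarrow> 'f \<Rightarrow> 'f \<Rightarrow> 'f" and e :: 'f
  assumes "noetherian_local R m"
    and "minimal_tate_resolution R m F d mu e"
  shows "\<exists>mu'. dg_algebra (assoc_graded R m) (lin_mod R m F) (lin_diff R m F d) mu'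
                  (gr_cls R (F 0) m 0 e) \<and>
           (\<forall>n k i j x y. x \<in> mpow_mod R (F n) m i \<longrightarrow> y \<in> mpow_mod R (F k) m j \<longrightarrow>
              mu' n k (gr_cls R (F n) m i x) (gr_cls R (F k) m j y)
                = gr_cls R (F (n + k)) m (i + j) (mu n k x y))"
proof -
  have mx: "maximalideal m R" using assms(1) unfolding noetherian_local_def by (elim conjE)
  then interpret mx: maximalideal m R .
  have mI: "m \<subseteq> carrier R" by (rule mx.a_subset)
  have dg: "dg_algebra R F d mu e" using assms(2) unfolding minimal_tate_resolution_def by (elim conjE)
  have mfr: "minimal_free_resolution R m F d" using assms(2) unfolding minimal_tate_resolution_def by (elim conjE)
  have minl: "\<And>n. d (Suc n) ` carrier (F (Suc n)) \<subseteq> mpow_mod R (F n) m 1"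
    using mfr unfolding minimal_free_resolution_def by (elim conjE) (rule allE)
  interpret main R m F d mu e by (rule main.intro[OF mI dg minl])
  show ?thesis
  proof (intro exI conjI allI impI)
    show "dg_algebra (assoc_graded R m) (lin_mod R m F) (lin_diff R m F d) (mu_lin R m F mu) (gr_cls R (F 0) m 0 e)"
      by (rule main_dg)
    fix n k i j x y
    assume "x \<in> mpow_mod R (F n) m i" "y \<in> mpow_mod R (F k) m j"
    then show "mu_lin R m F mu n k (gr_cls R (F n) m i x) (gr_cls R (F k) m j y) = gr_cls R (F (n + k)) m (i + j) (mu n k x y)"
      by (rule ml_cls)
  qed
qed


end
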